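(* Let $\Lambda^\omega_n$ be the ring of extended symmetric polynomials. Then $\Lambda^\omega_n$ is a free module of rank $2^n$ over $\Lambda_n$. Moreover, let $\tilde\omega_1,\dots,\tilde\omega_n\in\Lambda^\omega_n$ be any elements of the form $\tilde\omega_i=\omega_i+\sum_{j>i}f_{ij}\,\omega_j$ with $f_{ij}\in\mathcal P_n$ (such elements exist). Then multiplication in $\Lambda^\omega_n$ induces a ring isomorphism $$\Lambda_n\otimes_{\mathbb Q}\textstyle\bigwedge[\tilde\omega_1,\dots,\tilde\omega_n]\;\xrightarrow{\ \sim\ }\;\Lambda^\omega_n .$$
   Context: Let $\mathcal P_n=\mathbb Q[x_1,\dots,x_n]$ and $\Lambda_n=\mathcal P_n^{S_n}$ the ring of symmetric polynomials. The extended polynomial ring is $\mathcal P^\omega_n=\mathbb Q[x_1,\dots,x_n]\otimes_{\mathbb Q}\bigwedge[\omega_1,\dots,\omega_n]$, where the $\omega_i$ are odd (they anticommute with each other, square to zero, and commute with all $x_j$). The symmetric group $S_n$ acts on $\mathcal P^\omega_n$ by ring automorphisms determined, for the simple transpositions $s_i$ ($1\le i\le n-1$), by $s_i(x_j)=x_{s_i(j)}$ and $s_i(\omega_j)=\omega_j+\delta_{ij}(x_j-x_{j+1})\omega_{j+1}$. The extended divided difference operators are $\partial_i=(\mathrm{id}-s_i)/(x_i-x_{i+1})$ on $\mathcal P^\omega_n$. The ring of extended symmetric polynomials is $\Lambda^\omega_n=(\mathcal P^\omega_n)^{S_n}=\bigcap_{i=1}^{n-1}\ker\partial_i$. *)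

theory Defs
  imports Complex_Main "HOL-Library.Poly_Mapping"
begin

text \<open>Variable x_k is represented by the key k; the ring P_n consists of polynomials
whose monomials only involve x_1,...,x_n.\<close>

type_synonym mpoly = "(nat \<Rightarrow>\<^sub>0 nat) \<Rightarrow>\<^sub>0 rat"

definition Var :: "nat \<Rightarrow> mpoly" where
  "Var k = Poly_Mapping.single (Poly_Mapping.single k 1) 1"

definition Pn :: "nat \<Rightarrow> mpoly set" where
  "Pn n = {p. \<forall>m \<in> Poly_Mapping.keys p. Poly_Mapping.keys m \<subseteq> {1..n}}"

definition tr :: "nat \<Rightarrow> nat \<Rightarrow> nat" where
  "tr i k = (if k = i then i + 1 else if k = i + 1 then i else k)"

definition swap_vars :: "nat \<Rightarrow> mpoly \<Rightarrow> mpoly" where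
  "swap_vars i p = Poly_Mapping.map_key (\<lambda>m. Poly_Mapping.map_key (tr i) m) p"

definition Lam :: "nat \<Rightarrow> mpoly set" where
  "Lam n = {p \<in> Pn n. \<forall>i. 1 \<le> i \<and> i < n \<longrightarrow> swap_vars i p = p}"

text \<open>An element is given by its coefficients: f S is the coefficient of
omega_S = omega_(s_1) ... omega_(s_k) (s_1 < ... < s_k the elements of S).\<close>

type_synonym ext = "nat set \<Rightarrow> mpoly"

definition ext_carrier :: "nat \<Rightarrow> mpoly set \<Rightarrow> ext set" where
  "ext_carrier n R = {f. \<forall>S. (S \<subseteq> {1..n} \<longrightarrow> f S \<in> R) \<and> (\<not> S \<subseteq> {1..n} \<longrightarrow> f S = 0)}"

definition ext_add :: "ext \<Rightarrow> ext \<Rightarrow> ext" where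
  "ext_add f g = (\<lambda>S. f S + g S)"

definition ext_one :: ext where
  "ext_one = (\<lambda>S. if S = {} then 1 else 0)"

definition ext_scale :: "mpoly \<Rightarrow> ext \<Rightarrow> ext" where
  "ext_scale p f = (\<lambda>S. p * f S)"

text \<open>Sign of omega_S omega_T = sign * omega_(S union T) for disjoint S, T.\<close>
definition ext_sign :: "nat set \<Rightarrow> nat set \<Rightarrow> mpoly" where
  "ext_sign S T = (- 1) ^ card {(s, t). s \<in> S \<and> t \<in> T \<and> t < s}"

definition ext_mult :: "ext \<Rightarrow> ext \<Rightarrow> ext" where
  "ext_mult f g = (\<lambda>U. \<Sum>S \<in> Pow U. ext_sign S (U - S) * f S * g (U - S))"

definition ext_gen :: "nat \<Rightarrow> ext" where
  "ext_gen j = (\<lambda>S. if S = {j} then 1 else 0)"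

text \<open>The automorphism s_i of P^omega_n: s_i(x_j) = x_(s_i j),
s_i(omega_j) = omega_j + delta_ij (x_j - x_(j+1)) omega_(j+1).  On a basis
monomial p omega_S this gives s_i(p) omega_S, plus (if i in S, i+1 notin S)
s_i(p) (x_i - x_(i+1)) omega_(S - {i} + {i+1}) (no sign, as i+1 takes the
position of i in the increasing order).\<close>
definition ext_s :: "nat \<Rightarrow> ext \<Rightarrow> ext" where
  "ext_s i f = (\<lambda>U. swap_vars i (f U) +
      (if i + 1 \<in> U \<and> i \<notin> U
       then (Var i - Var (i + 1)) * swap_vars i (f (insert i (U - {i + 1})))
       else 0))"

definition LamOmega :: "nat \<Rightarrow> ext set" where
  "LamOmega n = {f \<in> ext_carrier n (Pn n). \<forall>i. 1 \<le> i \<and> i < n \<longrightarrow> ext_s i f = f}"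

definition ext_monom :: "(nat \<Rightarrow> ext) \<Rightarrow> nat set \<Rightarrow> ext" where
  "ext_monom w S = foldr ext_mult (map w (sorted_list_of_set S)) ext_one"

definition triangular_family :: "nat \<Rightarrow> (nat \<Rightarrow> ext) \<Rightarrow> bool" where
  "triangular_family n w \<longleftrightarrow> (\<forall>i \<in> {1..n}. \<exists>c. (\<forall>j. c j \<in> Pn n) \<and>
      w i = ext_add (ext_gen i)
              (\<lambda>S. \<Sum>j \<in> {i<..n}. ext_scale (c j) (ext_gen j) S))"

text \<open>The map Lambda_n tensor Exterior[w_1..w_n] -> P^omega_n induced by multiplication;
the source is represented as coefficient families c (c S = coefficient of w_S),
which is a ring via the same (super)commutative exterior multiplication ext_mult.\<close>
definition ext_eval :: "nat \<Rightarrow> (nat \<Rightarrow> ext) \<Rightarrow> ext \<Rightarrow> ext" where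
  "ext_eval n w c = (\<lambda>U. \<Sum>S \<in> Pow {1..n}. ext_scale (c S) (ext_monom w S) U)"

end

theory Submission
  imports Defs
begin



lemma tr_tr[simp]: "tr i (tr i k) = k"
  by (auto simp: tr_def)

lemma inj_tr: "inj (tr i)"
  by (metis injI tr_tr)

definition mtr :: "nat \<Rightarrow> (nat \<Rightarrow>\<^sub>0 nat) \<Rightarrow> (nat \<Rightarrow>\<^sub>0 nat)" where
  "mtr i m = Poly_Mapping.map_key (tr i) m"

lemma lookup_mtr: "Poly_Mapping.lookup (mtr i m) k = Poly_Mapping.lookup m (tr i k)"
  by (simp add: mtr_def map_key.rep_eq[OF inj_tr])

lemma mtr_mtr[simp]: "mtr i (mtr i m) = m"
  by (rule poly_mapping_eqI) (simp add: lookup_mtr)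

lemma inj_mtr: "inj (mtr i)"
  by (metis injI mtr_mtr)

lemma bij_mtr: "bij (mtr i)"
  by (metis bij_betw_def inj_mtr mtr_mtr surj_def)

lemma mtr_add: "mtr i (a + b) = mtr i a + mtr i b"
  by (rule poly_mapping_eqI) (simp add: lookup_mtr lookup_add)

lemma mtr_0[simp]: "mtr i 0 = 0"
  by (rule poly_mapping_eqI) (simp add: lookup_mtr)

lemma keys_mtr: "Poly_Mapping.keys (mtr i m) = tr i -` Poly_Mapping.keys m"
  by (auto simp: in_keys_iff lookup_mtr)

lemma lookup_swap: "Poly_Mapping.lookup (swap_vars i p) m = Poly_Mapping.lookup p (mtr i m)"
  by (simp add: swap_vars_def map_key.rep_eq[OF inj_mtr[unfolded mtr_def]] mtr_def)

lemma swap_swap[simp]: "swap_vars i (swap_vars i p) = p"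
  by (rule poly_mapping_eqI) (simp add: lookup_swap)

lemma swap_add[simp]: "swap_vars i (p + q) = swap_vars i p + swap_vars i q"
  by (rule poly_mapping_eqI) (simp add: lookup_swap lookup_add)

lemma swap_0[simp]: "swap_vars i 0 = 0"
  by (rule poly_mapping_eqI) (simp add: lookup_swap)

lemma swap_uminus[simp]: "swap_vars i (- p) = - swap_vars i p"
  by (rule poly_mapping_eqI) (simp add: lookup_swap lookup_uminus)

lemma swap_diff[simp]: "swap_vars i (p - q) = swap_vars i p - swap_vars i q"
  by (rule poly_mapping_eqI) (simp add: lookup_swap lookup_minus)

lemma swap_sum: "swap_vars i (\<Sum>x\<in>A. f x) = (\<Sum>x\<in>A. swap_vars i (f x))"
  by (induction A rule: infinite_finite_induct) auto

lemma swap_mult[simp]: "swap_vars i (p * q) = swap_vars i p * swap_vars i q"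
proof (rule poly_mapping_eqI)
  fix m
  have e: "(mtr i m = mtr i l + mtr i r) = (m = l + r)" for l r
    by (simp only: mtr_add[symmetric] inj_eq[OF inj_mtr])
  have "Poly_Mapping.lookup (swap_vars i (p * q)) m =
    Sum_any (\<lambda>l. Poly_Mapping.lookup p l * Sum_any (\<lambda>r. Poly_Mapping.lookup q r when mtr i m = l + r))"
    by (simp only: lookup_swap lookup_mult)
  also have "\<dots> = Sum_any (\<lambda>l. Poly_Mapping.lookup p (mtr i l) *
      Sum_any (\<lambda>r. Poly_Mapping.lookup q r when mtr i m = mtr i l + r))"
    by (rule Sum_any.reindex_cong[OF bij_mtr[of i]]) (simp add: fun_eq_iff)
  also have "\<dots> = Sum_any (\<lambda>l. Poly_Mapping.lookup p (mtr i l) *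
      Sum_any (\<lambda>r. Poly_Mapping.lookup q (mtr i r) when mtr i m = mtr i l + mtr i r))"
    by (rule arg_cong[where f=Sum_any], rule ext, rule arg_cong[where f="(*) _"],
        rule Sum_any.reindex_cong[OF bij_mtr[of i]]) (simp add: fun_eq_iff)
  also have "\<dots> = Sum_any (\<lambda>l. Poly_Mapping.lookup p (mtr i l) *
      Sum_any (\<lambda>r. Poly_Mapping.lookup q (mtr i r) when m = l + r))"
    by (simp only: e)
  also have "\<dots> = Poly_Mapping.lookup (swap_vars i p * swap_vars i q) m"
    by (simp only: lookup_swap lookup_mult)
  finally show "Poly_Mapping.lookup (swap_vars i (p * q)) m =
     Poly_Mapping.lookup (swap_vars i p * swap_vars i q) m" .
qed

lemma mtr_eq0: "(mtr i k = 0) = (k = 0)"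
  by (metis mtr_0 mtr_mtr)

lemma swap_1[simp]: "swap_vars i 1 = 1"
  by (rule poly_mapping_eqI) (simp add: lookup_swap lookup_one mtr_eq0)

lemma swap_power[simp]: "swap_vars i (p ^ k) = swap_vars i p ^ k"
  by (induction k) auto

lemma swap_neg1_pow[simp]: "swap_vars i ((-1) ^ k) = (-1) ^ k"
  by simp

lemma mtr_single: "mtr i (Poly_Mapping.single k 1) = Poly_Mapping.single (tr i k) 1"
  by (rule poly_mapping_eqI) (auto simp: lookup_mtr lookup_single when_def)

lemma mtr_eq_single: "(mtr i m = Poly_Mapping.single k 1) = (m = Poly_Mapping.single (tr i k) 1)"
  by (metis mtr_mtr mtr_single)

lemma mtr_eq_single': "(Poly_Mapping.single k 1 = mtr i m) = (Poly_Mapping.single (tr i k) 1 = m)"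
  using mtr_eq_single by metis

lemma swap_Var[simp]: "swap_vars i (Var k) = Var (tr i k)"
proof (rule poly_mapping_eqI)
  fix m
  have "\<And>m. (Poly_Mapping.single k (Suc 0) = mtr i m) = (Poly_Mapping.single (tr i k) (Suc 0) = m)"
    using mtr_eq_single'[of k i] by simp
  then show "Poly_Mapping.lookup (swap_vars i (Var k)) m = Poly_Mapping.lookup (Var (tr i k)) m"
    by (simp add: lookup_swap Var_def lookup_single when_def)
qed


lemma Pn_iff: "p \<in> Pn n \<longleftrightarrow> (\<forall>m \<in> Poly_Mapping.keys p. Poly_Mapping.keys m \<subseteq> {1..n})"
  by (simp add: Pn_def)

lemma Pn_0[simp]: "0 \<in> Pn n" by (simp add: Pn_iff)
lemma Pn_1[simp]: "1 \<in> Pn n" by (simp add: Pn_iff)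

lemma Pn_add[simp]: "p \<in> Pn n \<Longrightarrow> q \<in> Pn n \<Longrightarrow> p + q \<in> Pn n"
  unfolding Pn_iff using keys_add[of p q] by blast

lemma Pn_uminus[simp]: "p \<in> Pn n \<Longrightarrow> - p \<in> Pn n"
proof -
  have "Poly_Mapping.keys (- p) = Poly_Mapping.keys p"
    by (auto simp: in_keys_iff lookup_uminus)
  then show "p \<in> Pn n \<Longrightarrow> - p \<in> Pn n" by (simp add: Pn_iff)
qed

lemma Pn_diff[simp]: "p \<in> Pn n \<Longrightarrow> q \<in> Pn n \<Longrightarrow> p - q \<in> Pn n"
  using Pn_add[of p n "-q"] by simp

lemma Pn_mult[simp]: "p \<in> Pn n \<Longrightarrow> q \<in> Pn n \<Longrightarrow> p * q \<in> Pn n"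
  unfolding Pn_iff
proof
  fix m assume p: "\<forall>m\<in>Poly_Mapping.keys p. Poly_Mapping.keys m \<subseteq> {1..n}"
    and q: "\<forall>m\<in>Poly_Mapping.keys q. Poly_Mapping.keys m \<subseteq> {1..n}"
    and m: "m \<in> Poly_Mapping.keys (p * q)"
  then obtain a b where "m = a + b" "a \<in> Poly_Mapping.keys p" "b \<in> Poly_Mapping.keys q"
    using keys_mult[of p q] by blast
  then show "Poly_Mapping.keys m \<subseteq> {1..n}"
    using p q keys_add[of a b] by blast
qed

lemma Pn_sum[simp]: "(\<And>x. x \<in> A \<Longrightarrow> f x \<in> Pn n) \<Longrightarrow> (\<Sum>x\<in>A. f x) \<in> Pn n"
  by (induction A rule: infinite_finite_induct) auto

lemma Pn_power[simp]: "p \<in> Pn n \<Longrightarrow> p ^ k \<in> Pn n"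
  by (induction k) auto

lemma Pn_neg1_pow[simp]: "(-1) ^ k \<in> Pn n"
  by simp

lemma Pn_Var[simp]: "k \<in> {1..n} \<Longrightarrow> Var k \<in> Pn n"
  by (simp add: Pn_iff Var_def)

lemma Pn_mono: "p \<in> Pn m \<Longrightarrow> m \<le> n \<Longrightarrow> p \<in> Pn n"
  unfolding Pn_iff by (meson atLeastAtMost_iff order.trans subset_iff)

lemma tr_range: "1 \<le> i \<Longrightarrow> i < n \<Longrightarrow> (tr i k \<in> {1..n}) = (k \<in> {1..n})"
  by (auto simp: tr_def)

lemma Pn_swap[simp]: "1 \<le> i \<Longrightarrow> i < n \<Longrightarrow> p \<in> Pn n \<Longrightarrow> swap_vars i p \<in> Pn n"
  unfolding Pn_iff
proof
  fix m assume i: "1 \<le> i" "i < n" and p: "\<forall>m\<in>Poly_Mapping.keys p. Poly_Mapping.keys m \<subseteq> {1..n}"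
    and m: "m \<in> Poly_Mapping.keys (swap_vars i p)"
  then have "mtr i m \<in> Poly_Mapping.keys p" by (simp add: in_keys_iff lookup_swap)
  then have "Poly_Mapping.keys (mtr i m) \<subseteq> {1..n}" using p by blast
  then have A: "tr i -` Poly_Mapping.keys m \<subseteq> {1..n}" by (simp add: keys_mtr)
  show "Poly_Mapping.keys m \<subseteq> {1..n}"
  proof
    fix k assume "k \<in> Poly_Mapping.keys m"
    then have "tr i k \<in> tr i -` Poly_Mapping.keys m" by simp
    then have "tr i k \<in> {1..n}" using A by blast
    then show "k \<in> {1..n}" using tr_range[OF i] by blast
  qed
qed

lemma Lam_iff: "p \<in> Lam n \<longleftrightarrow> p \<in> Pn n \<and> (\<forall>i. 1 \<le> i \<and> i < n \<longrightarrow> swap_vars i p = p)"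
  by (simp add: Lam_def)

lemma Lam_0[simp]: "0 \<in> Lam n" by (simp add: Lam_iff)
lemma Lam_1[simp]: "1 \<in> Lam n" by (simp add: Lam_iff)
lemma Lam_add[simp]: "p \<in> Lam n \<Longrightarrow> q \<in> Lam n \<Longrightarrow> p + q \<in> Lam n" by (simp add: Lam_iff)
lemma Lam_diff[simp]: "p \<in> Lam n \<Longrightarrow> q \<in> Lam n \<Longrightarrow> p - q \<in> Lam n" by (simp add: Lam_iff)
lemma Lam_uminus[simp]: "p \<in> Lam n \<Longrightarrow> - p \<in> Lam n" by (simp add: Lam_iff)
lemma Lam_mult[simp]: "p \<in> Lam n \<Longrightarrow> q \<in> Lam n \<Longrightarrow> p * q \<in> Lam n" by (simp add: Lam_iff)
lemma Lam_Pn: "p \<in> Lam n \<Longrightarrow> p \<in> Pn n" by (simp add: Lam_iff)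




definition ninv :: "nat set \<Rightarrow> nat set \<Rightarrow> nat" where
  "ninv S T = card {(s, t). s \<in> S \<and> t \<in> T \<and> t < s}"

lemma ext_sign_inv: "ext_sign S T = (-1) ^ ninv S T"
  by (simp add: ext_sign_def ninv_def)

lemma inv_Un_left:
  assumes "finite A" "finite B" "finite C" "A \<inter> B = {}"
  shows "ninv (A \<union> B) C = ninv A C + ninv B C"
proof -
  have e: "{(s, t). s \<in> A \<union> B \<and> t \<in> C \<and> t < s} =
    {(s, t). s \<in> A \<and> t \<in> C \<and> t < s} \<union> {(s, t). s \<in> B \<and> t \<in> C \<and> t < s}" by auto
  have f1: "finite {(s, t). s \<in> A \<and> t \<in> C \<and> t < s}"
    by (rule finite_subset[of _ "A \<times> C"]) (use assms in auto)
  have f2: "finite {(s, t). s \<in> B \<and> t \<in> C \<and> t < s}"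
    by (rule finite_subset[of _ "B \<times> C"]) (use assms in auto)
  show ?thesis unfolding ninv_def e
    by (rule card_Un_disjoint[OF f1 f2]) (use assms in auto)
qed

lemma inv_Un_right:
  assumes "finite A" "finite B" "finite C" "B \<inter> C = {}"
  shows "ninv A (B \<union> C) = ninv A B + ninv A C"
proof -
  have e: "{(s, t). s \<in> A \<and> t \<in> B \<union> C \<and> t < s} =
    {(s, t). s \<in> A \<and> t \<in> B \<and> t < s} \<union> {(s, t). s \<in> A \<and> t \<in> C \<and> t < s}" by auto
  have f1: "finite {(s, t). s \<in> A \<and> t \<in> B \<and> t < s}"
    by (rule finite_subset[of _ "A \<times> B"]) (use assms in auto)
  have f2: "finite {(s, t). s \<in> A \<and> t \<in> C \<and> t < s}"
    by (rule finite_subset[of _ "A \<times> C"]) (use assms in auto)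
  show ?thesis unfolding ninv_def e
    by (rule card_Un_disjoint[OF f1 f2]) (use assms in auto)
qed

lemma inv_single_left: "finite T \<Longrightarrow> ninv {a} T = card {t \<in> T. t < a}"
proof -
  have "{(s, t). s \<in> {a} \<and> t \<in> T \<and> t < s} = (\<lambda>t. (a, t)) ` {t \<in> T. t < a}" by auto
  then show ?thesis unfolding ninv_def by (simp add: card_image inj_on_def)
qed

lemma inv_empty_left[simp]: "ninv {} T = 0" by (simp add: ninv_def)
lemma inv_empty_right[simp]: "ninv S {} = 0" by (simp add: ninv_def)

lemma sign_cocycle:
  assumes "finite A" "finite B" "finite C" "A \<inter> B = {}" "A \<inter> C = {}" "B \<inter> C = {}"
  shows "ext_sign (A \<union> B) C * ext_sign A B = ext_sign A (B \<union> C) * ext_sign B C"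
  unfolding ext_sign_inv using assms
  by (simp add: inv_Un_left inv_Un_right power_add[symmetric] algebra_simps)

lemma sign_insert_left:
  assumes "finite S" "finite T" "b \<notin> S"
  shows "ext_sign (insert b S) T = ext_sign S T * (-1) ^ card {t \<in> T. t < b}"
proof -
  have "ninv (insert b S) T = ninv ({b} \<union> S) T" by simp
  also have "\<dots> = ninv {b} T + ninv S T" using assms by (intro inv_Un_left) auto
  finally show ?thesis unfolding ext_sign_inv using assms
    by (simp add: inv_single_left power_add mult.commute)
qed

lemma sign_single_single: "ext_sign {s} {t} = (if t < s then -1 else 1)"
proof -
  have "{x \<in> {t}. x < s} = (if t < s then {t} else {})" by auto
  then show ?thesis by (simp add: ext_sign_inv inv_single_left)
qed

lemma sign_empty_left[simp]: "ext_sign {} T = 1" by (simp add: ext_sign_inv)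
lemma sign_empty_right[simp]: "ext_sign S {} = 1" by (simp add: ext_sign_inv)

lemma sum_only:
  assumes "finite A" "a \<in> A" "\<And>x. x \<in> A \<Longrightarrow> x \<noteq> a \<Longrightarrow> f x = 0"
  shows "sum f A = f a"
proof -
  have "sum f A = f a + sum f (A - {a})" using assms by (simp add: sum.remove)
  also have "sum f (A - {a}) = 0" using assms by (intro sum.neutral) auto
  finally show ?thesis by simp
qed

lemma mult_infinite: "infinite U \<Longrightarrow> ext_mult f g U = 0"
  by (simp add: ext_mult_def)

definition fin0 :: "ext \<Rightarrow> bool" where
  "fin0 f \<longleftrightarrow> (\<forall>U. infinite U \<longrightarrow> f U = 0)"

lemma fin0_mult[simp]: "fin0 (ext_mult f g)"
  by (simp add: fin0_def mult_infinite)

lemma fin0_one[simp]: "fin0 ext_one"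
  by (auto simp: fin0_def ext_one_def)

lemma mult_one_left: "fin0 g \<Longrightarrow> ext_mult ext_one g = g"
proof
  fix U assume g: "fin0 g"
  show "ext_mult ext_one g U = g U"
  proof (cases "finite U")
    case True
    have "ext_mult ext_one g U = ext_sign {} (U - {}) * ext_one {} * g (U - {})"
      unfolding ext_mult_def using True by (intro sum_only) (auto simp: ext_one_def)
    then show ?thesis by (simp add: ext_one_def)
  qed (use g in \<open>simp add: fin0_def mult_infinite\<close>)
qed

lemma mult_one_right: "fin0 g \<Longrightarrow> ext_mult g ext_one = g"
proof
  fix U assume g: "fin0 g"
  show "ext_mult g ext_one U = g U"
  proof (cases "finite U")
    case True
    have "ext_mult g ext_one U = ext_sign U (U - U) * g U * ext_one (U - U)"
      unfolding ext_mult_def using True by (intro sum_only) (auto simp: ext_one_def)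
    then show ?thesis by (simp add: ext_one_def)
  qed (use g in \<open>simp add: fin0_def mult_infinite\<close>)
qed

lemma lin_left:
  "ext_mult (\<lambda>X. \<Sum>i\<in>I. c i * F i X) G U = (\<Sum>i\<in>I. c i * ext_mult (F i) G U)"
  unfolding ext_mult_def
  by (simp add: sum_distrib_left sum_distrib_right sum.swap[of _ I] algebra_simps)

lemma lin_right:
  "ext_mult F (\<lambda>X. \<Sum>i\<in>I. c i * G i X) U = (\<Sum>i\<in>I. c i * ext_mult F (G i) U)"
  unfolding ext_mult_def
  by (simp add: sum_distrib_left sum_distrib_right sum.swap[of _ I] algebra_simps)

lemma mult_scale_left: "ext_mult (ext_scale p f) g = ext_scale p (ext_mult f g)"
  by (rule ext) (simp add: ext_mult_def ext_scale_def sum_distrib_left algebra_simps)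

lemma mult_scale_right: "ext_mult f (ext_scale p g) = ext_scale p (ext_mult f g)"
  by (rule ext) (simp add: ext_mult_def ext_scale_def sum_distrib_left algebra_simps)

lemma mult_zero_left[simp]: "ext_mult (\<lambda>_. 0) g = (\<lambda>_. 0)"
  by (rule ext) (simp add: ext_mult_def)

lemma mult_zero_right[simp]: "ext_mult f (\<lambda>_. 0) = (\<lambda>_. 0)"
  by (rule ext) (simp add: ext_mult_def)

lemma scale_scale[simp]: "ext_scale p (ext_scale q f) = ext_scale (p * q) f"
  by (rule ext) (simp add: ext_scale_def)

lemma scale_zero[simp]: "ext_scale p (\<lambda>_. 0) = (\<lambda>_. 0)"
  by (rule ext) (simp add: ext_scale_def)

lemma scale_one[simp]: "ext_scale 1 f = f"
  by (rule ext) (simp add: ext_scale_def)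

section \<open>Associativity\<close>

lemma mult_assoc: "ext_mult (ext_mult f g) h = ext_mult f (ext_mult g h)"
proof
  fix U
  show "ext_mult (ext_mult f g) h U = ext_mult f (ext_mult g h) U"
  proof (cases "finite U")
    case False then show ?thesis by (simp add: mult_infinite)
  next
    case fin: True
    define T where "T A S = ext_sign S (U - S) * ext_sign A (S - A) * f A * g (S - A) * h (U - S)" for A S
    have "ext_mult (ext_mult f g) h U = (\<Sum>S\<in>Pow U. \<Sum>A\<in>Pow S. T A S)"
      unfolding ext_mult_def T_def
      by (intro sum.cong refl) (simp add: sum_distrib_left sum_distrib_right algebra_simps)
    also have "\<dots> = (\<Sum>S\<in>Pow U. \<Sum>A\<in>{A \<in> Pow U. A \<subseteq> S}. T A S)"
      by (intro sum.cong refl) auto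
    also have "\<dots> = (\<Sum>A\<in>Pow U. \<Sum>S\<in>{S \<in> Pow U. A \<subseteq> S}. T A S)"
      using fin by (subst sum.swap_restrict) auto
    also have "\<dots> = (\<Sum>A\<in>Pow U. \<Sum>B\<in>Pow (U - A). T A (A \<union> B))"
    proof (rule sum.cong[OF refl])
      fix A assume A: "A \<in> Pow U"
      have "inj_on (\<lambda>B. A \<union> B) (Pow (U - A))" by (auto simp: inj_on_def)
      moreover have "(\<lambda>B. A \<union> B) ` Pow (U - A) = {S \<in> Pow U. A \<subseteq> S}"
      proof
        show "{S \<in> Pow U. A \<subseteq> S} \<subseteq> (\<lambda>B. A \<union> B) ` Pow (U - A)"
        proof
          fix S assume "S \<in> {S \<in> Pow U. A \<subseteq> S}"
          then have "S = A \<union> (S - A)" "S - A \<in> Pow (U - A)" by auto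
          then show "S \<in> (\<lambda>B. A \<union> B) ` Pow (U - A)" by blast
        qed
      qed (use A in auto)
      ultimately show "(\<Sum>S\<in>{S \<in> Pow U. A \<subseteq> S}. T A S) = (\<Sum>B\<in>Pow (U - A). T A (A \<union> B))"
        by (metis (no_types, lifting) sum.reindex_cong)
    qed
    also have "\<dots> = ext_mult f (ext_mult g h) U"
      unfolding ext_mult_def
    proof (rule sum.cong[OF refl])
      fix A assume A: "A \<in> Pow U"
      have "(\<Sum>B\<in>Pow (U - A). T A (A \<union> B)) =
        (\<Sum>B\<in>Pow (U - A). ext_sign A (U - A) * f A * (ext_sign B (U - A - B) * g B * h (U - A - B)))"
      proof (rule sum.cong[OF refl])
        fix B assume B: "B \<in> Pow (U - A)"
        have fA: "finite A" "finite B" "finite (U - A - B)" using A B fin by (auto intro: finite_subset)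
        have e1: "A \<union> B - A = B" "U - (A \<union> B) = U - A - B" using B by auto
        have e2: "B \<union> (U - A - B) = U - A" using B by auto
        have c: "ext_sign (A \<union> B) (U - A - B) * ext_sign A B = ext_sign A (U - A) * ext_sign B (U - A - B)"
          using sign_cocycle[of A B "U - A - B"] fA B e2 by auto
        show "T A (A \<union> B) = ext_sign A (U - A) * f A * (ext_sign B (U - A - B) * g B * h (U - A - B))"
          unfolding T_def e1 using c by (simp add: algebra_simps)
      qed
      also have "\<dots> = ext_sign A (U - A) * f A *
        (\<Sum>B\<in>Pow (U - A). ext_sign B (U - A - B) * g B * h (U - A - B))"
        by (simp add: sum_distrib_left)
      finally show "(\<Sum>B\<in>Pow (U - A). T A (A \<union> B)) = ext_sign A (U - A) * f A *
        (\<Sum>B\<in>Pow (U - A). ext_sign B (U - A - B) * g B * h (U - A - B))" .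
    qed
    finally show ?thesis .
  qed
qed




definition oddv :: "ext \<Rightarrow> bool" where
  "oddv v \<longleftrightarrow> (\<forall>S. v S \<noteq> 0 \<longrightarrow> (\<exists>j. S = {j}))"

lemma oddv_fin0: "oddv v \<Longrightarrow> fin0 v"
  unfolding oddv_def fin0_def by fastforce

lemma mult_odd_left:
  assumes a: "oddv a" and U: "finite U"
  shows "ext_mult a g U = (\<Sum>j\<in>U. ext_sign {j} (U - {j}) * a {j} * g (U - {j}))"
proof -
  let ?F = "\<lambda>S. ext_sign S (U - S) * a S * g (U - S)"
  have "ext_mult a g U = sum ?F (Pow U)" by (simp add: ext_mult_def)
  also have "\<dots> = sum ?F ((\<lambda>j. {j}) ` U)"
  proof (rule sum.mono_neutral_right)
    show "finite (Pow U)" using U by simp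
    show "(\<lambda>j. {j}) ` U \<subseteq> Pow U" by auto
    show "\<forall>S\<in>Pow U - (\<lambda>j. {j}) ` U. ?F S = 0"
    proof
      fix S assume S: "S \<in> Pow U - (\<lambda>j. {j}) ` U"
      have "a S = 0"
      proof (rule ccontr)
        assume "a S \<noteq> 0"
        then obtain j where "S = {j}" using a by (auto simp: oddv_def)
        then show False using S by auto
      qed
      then show "?F S = 0" by simp
    qed
  qed
  also have "\<dots> = (\<Sum>j\<in>U. ?F {j})"
    by (subst sum.reindex) (auto simp: inj_on_def)
  finally show ?thesis .
qed

lemma odd_two:
  assumes "oddv a" "oddv b" "s \<noteq> t"
  shows "ext_mult a b {s, t} = ext_sign {s} {t} * a {s} * b {t} + ext_sign {t} {s} * a {t} * b {s}"
proof -
  have e: "{s, t} - {s} = {t}" "{s, t} - {t} = {s}" using assms by auto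
  show ?thesis using assms by (simp add: mult_odd_left e)
qed

lemma odd_zero:
  assumes a: "oddv a" and b: "oddv b" and U: "finite U" and nt: "\<not> (\<exists>s t. s \<noteq> t \<and> U = {s, t})"
  shows "ext_mult a b U = 0"
proof -
  have "ext_sign {j} (U - {j}) * a {j} * b (U - {j}) = 0" if j: "j \<in> U" for j
  proof -
    have "b (U - {j}) = 0"
    proof (rule ccontr)
      assume "b (U - {j}) \<noteq> 0"
      then obtain k where k: "U - {j} = {k}" using b by (auto simp: oddv_def)
      then have "j \<noteq> k" "U = {j, k}" using j by auto
      then show False using nt by blast
    qed
    then show ?thesis by simp
  qed
  then show ?thesis unfolding mult_odd_left[OF a U] by (intro sum.neutral) blast
qed

lemma odd_anticomm:
  assumes a: "oddv a" and b: "oddv b"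
  shows "ext_mult a b = ext_scale (-1) (ext_mult b a)"
proof
  fix U
  show "ext_mult a b U = ext_scale (-1) (ext_mult b a) U"
  proof (cases "finite U")
    case False then show ?thesis by (simp add: mult_infinite ext_scale_def)
  next
    case U: True
    show ?thesis
    proof (cases "\<exists>s t. s \<noteq> t \<and> U = {s, t}")
      case True
      then obtain s t where st: "s \<noteq> t" "U = {s, t}" by blast
      have ba: "ext_mult b a U = ext_sign {t} {s} * b {t} * a {s} + ext_sign {s} {t} * b {s} * a {t}"
      proof -
        have "{t, s} = U" using st by auto
        then show ?thesis using odd_two[OF b a, of t s] st(1) by simp
      qed
      have sg: "ext_sign {t} {s} = - ext_sign {s} {t}"
        using st by (auto simp: sign_single_single)
      have ab: "ext_mult a b U = ext_sign {s} {t} * a {s} * b {t} + ext_sign {t} {s} * a {t} * b {s}"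
        using odd_two[OF a b st(1)] st(2) by simp
      have alg: "x * p * q + (- x) * r * y = (-1) * ((- x) * q * p + x * y * r)" for x p q r y :: mpoly
        by (simp add: algebra_simps)
      show ?thesis unfolding ext_scale_def ab ba sg by (rule alg)
    next
      case False
      then show ?thesis using odd_zero[OF a b U] odd_zero[OF b a U] by (simp add: ext_scale_def)
    qed
  qed
qed

lemma odd_square: "oddv a \<Longrightarrow> ext_mult a a = (\<lambda>_. 0)"
proof
  fix U assume a: "oddv a"
  have "ext_mult a a U = - ext_mult a a U"
    using fun_cong[OF odd_anticomm[OF a a], of U] by (simp add: ext_scale_def)
  then show "ext_mult a a U = 0" using equal_neg_zero by blast
qed

section \<open>Monomials\<close>

definition oddfam :: "(nat \<Rightarrow> ext) \<Rightarrow> bool" where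
  "oddfam v \<longleftrightarrow> (\<forall>j. oddv (v j))"

lemma monom_empty[simp]: "ext_monom v {} = ext_one"
  by (simp add: ext_monom_def)

lemma monom_insert:
  assumes "finite V" "\<forall>x\<in>V. a < x"
  shows "ext_monom v (insert a V) = ext_mult (v a) (ext_monom v V)"
proof -
  have "a \<notin> V" using assms by auto
  then have "sorted_list_of_set (insert a V) = a # sorted_list_of_set V"
    using assms by (simp add: sorted_list_of_set_insert insort_is_Cons less_imp_le)
  then show ?thesis by (simp add: ext_monom_def)
qed

lemma fin0_monom[simp]: "fin0 (ext_monom v S)"
  by (cases "map v (sorted_list_of_set S)") (simp_all add: ext_monom_def)

lemma card_less_empty: "\<forall>x\<in>(V::nat set). a < x \<Longrightarrow> card {x \<in> V. x < a} = 0"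
proof -
  assume "\<forall>x\<in>V. a < x"
  then have "{x \<in> V. x < a} = {}" by auto
  then show ?thesis by simp
qed

lemma gen_monom:
  assumes v: "oddfam v" and V: "finite V"
  shows "ext_mult (v a) (ext_monom v V) =
    (if a \<in> V then (\<lambda>_. 0) else ext_scale ((-1) ^ card {x \<in> V. x < a}) (ext_monom v (insert a V)))"
  using V
proof (induction V arbitrary: a rule: finite_linorder_min_induct)
  case empty
  have "fin0 (v a)" using v by (simp add: oddfam_def oddv_fin0)
  then show ?case by (simp add: mult_one_right monom_insert)
next
  case (insert b W)
  have bW: "b \<notin> W" using insert(2) by auto
  have mV: "ext_monom v (insert b W) = ext_mult (v b) (ext_monom v W)"
    using insert(1,2) by (simp add: monom_insert)
  consider "a < b" | "a = b" | "b < a" by linarith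
  then show ?case
  proof cases
    case 1
    then have "\<forall>x\<in>insert b W. a < x" using insert(2) by auto
    then have c0: "card {x \<in> insert b W. x < a} = 0" and aV: "a \<notin> insert b W"
      by (auto intro: card_less_empty)
    have "ext_monom v (insert a (insert b W)) = ext_mult (v a) (ext_monom v (insert b W))"
      using \<open>\<forall>x\<in>insert b W. a < x\<close> insert(1) by (intro monom_insert) auto
    then show ?thesis unfolding if_not_P[OF aV] c0 power_0 scale_one by simp
  next
    case 3
    have ov: "oddv (v a)" "oddv (v b)" using v by (auto simp: oddfam_def)
    have "ext_mult (v a) (ext_monom v (insert b W)) = ext_mult (ext_mult (v a) (v b)) (ext_monom v W)"
      by (simp add: mV mult_assoc)
    also have "\<dots> = ext_scale (-1) (ext_mult (v b) (ext_mult (v a) (ext_monom v W)))"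
      by (simp add: odd_anticomm[OF ov] mult_scale_left mult_assoc)
    finally have e: "ext_mult (v a) (ext_monom v (insert b W)) =
      ext_scale (-1) (ext_mult (v b) (ext_mult (v a) (ext_monom v W)))" .
    show ?thesis
    proof (cases "a \<in> W")
      case True
      then show ?thesis using e insert(3)[of a] by simp
    next
      case False
      have ins: "ext_monom v (insert b (insert a W)) = ext_mult (v b) (ext_monom v (insert a W))"
        using insert(1,2) 3 by (intro monom_insert) auto
      have c: "card {x \<in> insert b W. x < a} = Suc (card {x \<in> W. x < a})"
      proof -
        have "{x \<in> insert b W. x < a} = insert b {x \<in> W. x < a}" using 3 by auto
        then show ?thesis using bW insert(1) by simp
      qed
      have ab: "insert b (insert a W) = insert a (insert b W)" by auto
      have aV: "a \<notin> insert b W" using False 3 by auto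
      have "ext_mult (v a) (ext_monom v (insert b W)) =
          ext_scale (-1) (ext_mult (v b) (ext_scale ((-1) ^ card {x \<in> W. x < a}) (ext_monom v (insert a W))))"
        using e insert(3)[of a] False by simp
      also have "\<dots> = ext_scale ((-1) ^ card {x \<in> insert b W. x < a}) (ext_mult (v b) (ext_monom v (insert a W)))"
        unfolding mult_scale_right scale_scale c by simp
      also have "\<dots> = ext_scale ((-1) ^ card {x \<in> insert b W. x < a}) (ext_monom v (insert a (insert b W)))"
        unfolding ins[symmetric] ab ..
      finally show ?thesis using aV by simp
    qed
  next
    case 2
    have ov: "oddv (v a)" using v by (auto simp: oddfam_def)
    have "ext_mult (v a) (ext_monom v (insert b W)) = ext_mult (ext_mult (v a) (v a)) (ext_monom v W)"
      using 2 by (simp add: mV mult_assoc)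
    then show ?thesis using 2 by (simp add: odd_square[OF ov[unfolded 2]])
  qed
qed

lemma monom_mult:
  assumes v: "oddfam v" and S: "finite S" and T: "finite T"
  shows "ext_mult (ext_monom v S) (ext_monom v T) =
    (if S \<inter> T = {} then ext_scale (ext_sign S T) (ext_monom v (S \<union> T)) else (\<lambda>_. 0))"
  using S
proof (induction S rule: finite_linorder_min_induct)
  case empty
  then show ?case by (simp add: mult_one_left)
next
  case (insert b W)
  have bW: "b \<notin> W" using insert by auto
  have "ext_mult (ext_monom v (insert b W)) (ext_monom v T) =
      ext_mult (v b) (ext_mult (ext_monom v W) (ext_monom v T))"
    using insert by (simp add: monom_insert mult_assoc)
  also have "\<dots> = (if insert b W \<inter> T = {} then
      ext_scale (ext_sign (insert b W) T) (ext_monom v (insert b W \<union> T)) else (\<lambda>_. 0))"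
  proof (cases "W \<inter> T = {}")
    case False
    then show ?thesis using insert by auto
  next
    case True
    have fin: "finite (W \<union> T)" using insert T by simp
    have g: "ext_mult (v b) (ext_monom v (W \<union> T)) =
      (if b \<in> W \<union> T then (\<lambda>_. 0) else ext_scale ((-1) ^ card {x \<in> W \<union> T. x < b}) (ext_monom v (insert b (W \<union> T))))"
      by (rule gen_monom[OF v fin])
    have c: "{x \<in> W \<union> T. x < b} = {x \<in> T. x < b}" using insert by auto
    have sg: "ext_sign (insert b W) T = ext_sign W T * (-1) ^ card {t \<in> T. t < b}"
      by (rule sign_insert_left) (use insert T bW in auto)
    show ?thesis using True insert(3) g c sg bW
      by (auto simp: mult_scale_right)
  qed
  finally show ?case .
qed

section \<open>Evaluation is multiplicative\<close>

lemma eval_mult: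
  assumes v: "oddfam v"
  shows "ext_eval n v (ext_mult f g) = ext_mult (ext_eval n v f) (ext_eval n v g)"
proof
  fix U
  let ?P = "Pow {1..n}"
  let ?m = "ext_monom v"
  have finP: "finite ?P" by simp
  have finS: "finite S" if "S \<in> ?P" for S using that finite_subset by auto
  define G where "G S W = ext_sign S (W - S) * f S * g (W - S) * ?m W U" for S W
  have "ext_mult (ext_eval n v f) (ext_eval n v g) U =
    ext_mult (\<lambda>X. \<Sum>S\<in>?P. f S * ?m S X) (\<lambda>Y. \<Sum>T\<in>?P. g T * ?m T Y) U"
    by (simp add: ext_eval_def ext_scale_def)
  also have "\<dots> = (\<Sum>S\<in>?P. f S * (\<Sum>T\<in>?P. g T * ext_mult (?m S) (?m T) U))"
    by (simp add: lin_left lin_right)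
  also have "\<dots> = (\<Sum>S\<in>?P. \<Sum>T\<in>?P. if S \<inter> T = {} then G S (S \<union> T) else 0)"
  proof (rule sum.cong[OF refl])
    fix S assume S: "S \<in> ?P"
    show "f S * (\<Sum>T\<in>?P. g T * ext_mult (?m S) (?m T) U) =
      (\<Sum>T\<in>?P. if S \<inter> T = {} then G S (S \<union> T) else 0)"
      unfolding sum_distrib_left
    proof (rule sum.cong[OF refl])
      fix T assume T: "T \<in> ?P"
      have e: "S \<union> T - S = T" if "S \<inter> T = {}" using that by auto
      show "f S * (g T * ext_mult (?m S) (?m T) U) = (if S \<inter> T = {} then G S (S \<union> T) else 0)"
        using monom_mult[OF v finS[OF S] finS[OF T]] e
        by (auto simp: G_def ext_scale_def algebra_simps)
    qed
  qed
  also have "\<dots> = (\<Sum>S\<in>?P. \<Sum>T\<in>{T \<in> ?P. S \<inter> T = {}}. G S (S \<union> T))"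
    by (simp add: sum.inter_filter[symmetric] Pow_def)
  also have "\<dots> = (\<Sum>S\<in>?P. \<Sum>W\<in>{W \<in> ?P. S \<subseteq> W}. G S W)"
  proof (rule sum.cong[OF refl])
    fix S assume S: "S \<in> ?P"
    have "inj_on (\<lambda>T. S \<union> T) {T \<in> ?P. S \<inter> T = {}}" by (auto simp: inj_on_def)
    moreover have "(\<lambda>T. S \<union> T) ` {T \<in> ?P. S \<inter> T = {}} = {W \<in> ?P. S \<subseteq> W}"
    proof
      show "{W \<in> ?P. S \<subseteq> W} \<subseteq> (\<lambda>T. S \<union> T) ` {T \<in> ?P. S \<inter> T = {}}"
      proof
        fix W assume "W \<in> {W \<in> ?P. S \<subseteq> W}"
        then have "W = S \<union> (W - S)" "W - S \<in> {T \<in> ?P. S \<inter> T = {}}" by auto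
        then show "W \<in> (\<lambda>T. S \<union> T) ` {T \<in> ?P. S \<inter> T = {}}" by blast
      qed
    qed (use S in auto)
    ultimately show "(\<Sum>T\<in>{T \<in> ?P. S \<inter> T = {}}. G S (S \<union> T)) = (\<Sum>W\<in>{W \<in> ?P. S \<subseteq> W}. G S W)"
      by (metis (no_types, lifting) sum.reindex_cong)
  qed
  also have "\<dots> = (\<Sum>W\<in>?P. \<Sum>S\<in>{S \<in> ?P. S \<subseteq> W}. G S W)"
    using finP by (subst sum.swap_restrict) auto
  also have "\<dots> = (\<Sum>W\<in>?P. \<Sum>S\<in>Pow W. G S W)"
    by (rule sum.cong[OF refl]) (rule sum.cong, auto)
  also have "\<dots> = ext_eval n v (ext_mult f g) U"
    by (simp add: ext_eval_def ext_scale_def ext_mult_def G_def sum_distrib_left algebra_simps)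
  finally show "ext_eval n v (ext_mult f g) U = ext_mult (ext_eval n v f) (ext_eval n v g) U" ..
qed




definition supn :: "nat \<Rightarrow> ext \<Rightarrow> bool" where
  "supn n f \<longleftrightarrow> (\<forall>S. \<not> S \<subseteq> {1..n} \<longrightarrow> f S = 0)"

lemma sup_mult[simp]: "supn n f \<Longrightarrow> supn n g \<Longrightarrow> supn n (ext_mult f g)"
  unfolding supn_def ext_mult_def
proof (intro allI impI)
  fix U assume f: "\<forall>S. \<not> S \<subseteq> {1..n} \<longrightarrow> f S = 0" and g: "\<forall>S. \<not> S \<subseteq> {1..n} \<longrightarrow> g S = 0"
    and U: "\<not> U \<subseteq> {1..n}"
  show "(\<Sum>S\<in>Pow U. ext_sign S (U - S) * f S * g (U - S)) = 0"
  proof (intro sum.neutral ballI)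
    fix S assume "S \<in> Pow U"
    then have "\<not> S \<subseteq> {1..n} \<or> \<not> U - S \<subseteq> {1..n}" using U by blast
    then show "ext_sign S (U - S) * f S * g (U - S) = 0"
    proof
      assume "\<not> S \<subseteq> {1..n}" then show ?thesis using f by simp
    next
      assume "\<not> U - S \<subseteq> {1..n}" then show ?thesis using g by simp
    qed
  qed
qed

lemma sup_one[simp]: "supn n ext_one"
  by (auto simp: supn_def ext_one_def)

lemma sup_monom: "finite S \<Longrightarrow> (\<And>j. j \<in> S \<Longrightarrow> supn n (w j)) \<Longrightarrow> supn n (ext_monom w S)"
proof -
  assume fS: "finite S" and a: "\<And>j. j \<in> S \<Longrightarrow> supn n (w j)"
  have "\<forall>j\<in>set xs. supn n (w j) \<Longrightarrow> supn n (foldr ext_mult (map w xs) ext_one)" for xs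
    by (induction xs) auto
  then show ?thesis unfolding ext_monom_def
    using a fS by simp
qed

lemma carrier_iff: "f \<in> ext_carrier n R \<longleftrightarrow> supn n f \<and> (\<forall>S. S \<subseteq> {1..n} \<longrightarrow> f S \<in> R)"
  by (auto simp: ext_carrier_def supn_def)

lemma carrier_mult:
  assumes "f \<in> ext_carrier n (Pn n)" "g \<in> ext_carrier n (Pn n)"
  shows "ext_mult f g \<in> ext_carrier n (Pn n)"
  unfolding carrier_iff
proof (intro conjI allI impI)
  show "supn n (ext_mult f g)" using assms by (simp add: carrier_iff)
  fix U assume U: "U \<subseteq> {1..n}"
  have sub: "S \<subseteq> U \<Longrightarrow> U - S \<subseteq> {1..n}" "S \<subseteq> U \<Longrightarrow> S \<subseteq> {1..n}" for S using U by auto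
  show "ext_mult f g U \<in> Pn n" unfolding ext_mult_def ext_sign_def
    using assms sub by (intro Pn_sum Pn_mult) (auto simp: carrier_iff)
qed

lemma carrier_one: "ext_one \<in> ext_carrier n (Pn n)"
  unfolding carrier_iff by (auto simp: supn_def ext_one_def)

lemma carrier_monom:
  assumes "finite S" "\<And>j. j \<in> S \<Longrightarrow> w j \<in> ext_carrier n (Pn n)"
  shows "ext_monom w S \<in> ext_carrier n (Pn n)"
proof -
  have "\<forall>j\<in>set xs. w j \<in> ext_carrier n (Pn n) \<Longrightarrow> foldr ext_mult (map w xs) ext_one \<in> ext_carrier n (Pn n)" for xs
    by (induction xs) (auto simp: carrier_one carrier_mult)
  then show ?thesis unfolding ext_monom_def
    using assms by simp
qed

section \<open>Decomposition of s_i\<close>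

definition sig :: "nat \<Rightarrow> ext \<Rightarrow> ext" where
  "sig i f = (\<lambda>U. swap_vars i (f U))"

definition tau :: "nat \<Rightarrow> ext \<Rightarrow> ext" where
  "tau i f = (\<lambda>U. f U + (if i + 1 \<in> U \<and> i \<notin> U
       then (Var i - Var (i + 1)) * f (insert i (U - {i + 1})) else 0))"

lemma ext_s_decomp: "ext_s i f = tau i (sig i f)"
  by (simp add: ext_s_def tau_def sig_def)

lemma sig_mult: "sig i (ext_mult f g) = ext_mult (sig i f) (sig i g)"
  by (rule ext) (simp add: sig_def ext_mult_def swap_sum ext_sign_def)

lemma sup_sig: "supn n f \<Longrightarrow> supn n (sig i f)"
  by (simp add: supn_def sig_def)

definition ind :: "nat set \<Rightarrow> ext" where
  "ind S = (\<lambda>U. if U = S then 1 else 0)"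

lemma oddv_gen: "oddv (ext_gen a)"
  by (simp add: oddv_def ext_gen_def)

lemma gen_mult: "ext_mult (ext_gen a) g U = (if finite U \<and> a \<in> U then ext_sign {a} (U - {a}) * g (U - {a}) else 0)"
proof (cases "finite U")
  case True
  have "ext_mult (ext_gen a) g U = (\<Sum>j\<in>U. ext_sign {j} (U - {j}) * ext_gen a {j} * g (U - {j}))"
    by (rule mult_odd_left[OF oddv_gen True])
  also have "\<dots> = (\<Sum>j\<in>U. if j = a then ext_sign {a} (U - {a}) * g (U - {a}) else 0)"
    by (rule sum.cong) (auto simp: ext_gen_def)
  also have "\<dots> = (if a \<in> U then ext_sign {a} (U - {a}) * g (U - {a}) else 0)"
    using True by (simp add: sum.delta')
  finally show ?thesis using True by simp
qed (simp add: mult_infinite)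

lemma gen_ind_notin:
  assumes "finite V" "a \<notin> V" "\<forall>x\<in>V. a < x"
  shows "ext_mult (ext_gen a) (ind V) = ind (insert a V)"
proof
  fix U
  have s: "ext_sign {a} V = 1"
    using assms by (simp add: ext_sign_inv inv_single_left card_less_empty)
  show "ext_mult (ext_gen a) (ind V) U = ind (insert a V) U"
    unfolding gen_mult ind_def using assms s by (auto simp: insert_Diff_if)
qed

lemma gen_ind_in:
  assumes "a \<in> V"
  shows "ext_mult (ext_gen a) (ind V) = (\<lambda>_. 0)"
  by (rule ext) (use assms in \<open>auto simp: gen_mult ind_def\<close>)

lemma mult_add_left: "ext_mult (ext_add f g) h = ext_add (ext_mult f h) (ext_mult g h)"
  by (rule ext) (simp add: ext_mult_def ext_add_def sum.distrib algebra_simps)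

lemma mult_add_right: "ext_mult f (ext_add g h) = ext_add (ext_mult f g) (ext_mult f h)"
  by (rule ext) (simp add: ext_mult_def ext_add_def sum.distrib algebra_simps)

definition vgen :: "nat \<Rightarrow> nat \<Rightarrow> ext" where
  "vgen i j = (if j = i then ext_add (ext_gen i) (ext_scale (Var i - Var (i + 1)) (ext_gen (i + 1))) else ext_gen j)"

lemma oddfam_vgen: "oddfam (vgen i)"
  by (auto simp: oddfam_def oddv_def vgen_def ext_gen_def ext_add_def ext_scale_def)

definition Mv :: "nat \<Rightarrow> nat set \<Rightarrow> ext" where
  "Mv i S = (if i \<in> S \<and> i + 1 \<notin> S then ext_add (ind S) (ext_scale (Var i - Var (i + 1)) (ind (insert (i + 1) (S - {i})))) else ind S)"

lemma monom_vgen: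
  assumes "finite S"
  shows "ext_monom (vgen i) S = Mv i S"
  using assms
proof (induction S rule: finite_linorder_min_induct)
  case empty
  show ?case by (simp add: Mv_def ind_def ext_one_def)
next
  case (insert a V)
  let ?c = "Var i - Var (i + 1)"
  have aV: "a \<notin> V" using insert(2) by auto
  have m: "ext_monom (vgen i) (insert a V) = ext_mult (vgen i a) (Mv i V)"
    using insert by (simp add: monom_insert)
  show ?case
  proof (cases "a = i")
    case True
    have iV: "i \<notin> V" using aV True by simp
    then have MV: "Mv i V = ind V" by (simp add: Mv_def)
    have "ext_mult (vgen i a) (Mv i V) =
        ext_add (ind (insert i V)) (ext_scale ?c (ext_mult (ext_gen (i + 1)) (ind V)))"
      using True insert(1,2) aV
      by (simp add: MV vgen_def mult_add_left mult_scale_left gen_ind_notin)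
    also have "\<dots> = Mv i (insert a V)"
    proof (cases "i + 1 \<in> V")
      case True
      then show ?thesis using \<open>a = i\<close> by (simp add: gen_ind_in Mv_def ext_add_def ext_scale_def)
    next
      case False
      have "\<forall>x\<in>V. i + 1 < x"
      proof
        fix x assume "x \<in> V"
        then have "i < x" "x \<noteq> i + 1" using insert(2) \<open>a = i\<close> False by auto
        then show "i + 1 < x" by linarith
      qed
      then have "ext_mult (ext_gen (i + 1)) (ind V) = ind (insert (i + 1) V)"
        using False insert(1) by (intro gen_ind_notin) auto
      moreover have "insert (i + 1) (insert i V - {i}) = insert (i + 1) V" using iV by auto
      ultimately show ?thesis using \<open>a = i\<close> False by (simp add: Mv_def)
    qed
    finally show ?thesis using m by simp
  next
    case False
    have va: "vgen i a = ext_gen a" using False by (simp add: vgen_def)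
    have g1: "ext_mult (ext_gen a) (ind V) = ind (insert a V)"
      using insert(1,2) aV by (intro gen_ind_notin) auto
    show ?thesis
    proof (cases "i \<in> V \<and> i + 1 \<notin> V")
      case True
      let ?V' = "insert (i + 1) (V - {i})"
      have ai: "a < i" using insert(2) True by auto
      have "ext_mult (ext_gen a) (ind ?V') = ind (insert a ?V')"
        using insert(1,2) ai by (intro gen_ind_notin) auto
      moreover have "insert (i + 1) (insert a V - {i}) = insert a ?V'" using ai by auto
      moreover have "i \<in> insert a V \<and> i + 1 \<notin> insert a V" using True ai by auto
      then have MaV: "Mv i (insert a V) = ext_add (ind (insert a V)) (ext_scale ?c (ind (insert (i + 1) (insert a V - {i}))))"
        unfolding Mv_def by (rule if_P)
      moreover have MV: "Mv i V = ext_add (ind V) (ext_scale ?c (ind ?V'))"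
        unfolding Mv_def using True by (rule if_P)
      ultimately show ?thesis using m va g1
        by (simp add: mult_add_right mult_scale_right)
    next
      case F2: False
      have "\<not> (i \<in> insert a V \<and> i + 1 \<notin> insert a V)" using F2 False by auto
      then have MaV: "Mv i (insert a V) = ind (insert a V)" unfolding Mv_def by (rule if_not_P)
      have MV: "Mv i V = ind V" unfolding Mv_def using F2 by (rule if_not_P)
      show ?thesis using m va g1 MaV MV by simp
    qed
  qed
qed

lemma tau_eval:
  assumes i: "1 \<le> i" "i < n" and f: "supn n f"
  shows "ext_eval n (vgen i) f = tau i f"
proof
  fix U
  let ?P = "Pow {1..n}"
  let ?c = "Var i - Var (i + 1)"
  let ?S0 = "insert i (U - {i + 1})"
  let ?Q = "i + 1 \<in> U \<and> i \<notin> U"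
  have fin: "finite S" if "S \<in> ?P" for S using that finite_subset by auto
  have "ext_eval n (vgen i) f U = (\<Sum>S\<in>?P. f S * Mv i S U)"
    unfolding ext_eval_def ext_scale_def by (intro sum.cong refl) (simp add: monom_vgen fin)
  also have "\<dots> = (\<Sum>S\<in>?P. (if S = U then f S else 0) + (if S = ?S0 \<and> ?Q then ?c * f S else 0))"
  proof (rule sum.cong[OF refl])
    fix S assume S: "S \<in> ?P"
    show "f S * Mv i S U = (if S = U then f S else 0) + (if S = ?S0 \<and> ?Q then ?c * f S else 0)"
    proof (cases "i \<in> S \<and> i + 1 \<notin> S")
      case True
      have e: "(U = insert (i + 1) (S - {i})) \<longleftrightarrow> (S = ?S0 \<and> ?Q)" using True by auto
      have "Mv i S U = ind S U + ?c * ind (insert (i + 1) (S - {i})) U"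
        unfolding Mv_def using True by (simp add: ext_add_def ext_scale_def)
      then show ?thesis unfolding ind_def e[symmetric]
        by (cases "U = S"; cases "U = insert (i + 1) (S - {i})") (simp_all add: distrib_left)
    next
      case False
      have e: "\<not> (S = ?S0 \<and> ?Q)" using False by auto
      have "Mv i S U = ind S U" by (simp only: Mv_def if_not_P[OF False])
      then show ?thesis unfolding ind_def if_not_P[OF e] by (cases "U = S") simp_all
    qed
  qed
  also have "\<dots> = (\<Sum>S\<in>?P. if S = U then f S else 0) + (\<Sum>S\<in>?P. if S = ?S0 \<and> ?Q then ?c * f S else 0)"
    by (rule sum.distrib)
  also have "(\<Sum>S\<in>?P. if S = U then f S else 0) = f U"
    using f unfolding supn_def by (subst sum.delta) auto
  also have "(\<Sum>S\<in>?P. if S = ?S0 \<and> ?Q then ?c * f S else 0) = (if ?Q then ?c * f ?S0 else 0)"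
  proof (cases ?Q)
    case True
    then have "(\<Sum>S\<in>?P. if S = ?S0 \<and> ?Q then ?c * f S else 0) = (\<Sum>S\<in>?P. if S = ?S0 then ?c * f S else 0)"
      by simp
    also have "\<dots> = ?c * f ?S0"
      using f unfolding supn_def by (subst sum.delta) auto
    finally show ?thesis using True by simp
  next
    case False
    have nq: "\<not> (S = ?S0 \<and> ?Q)" for S using False by blast
    show ?thesis unfolding if_not_P[OF nq] if_not_P[OF False] by simp
  qed
  also have "f U + (if ?Q then ?c * f ?S0 else 0) = tau i f U"
    unfolding tau_def by simp
  finally show "ext_eval n (vgen i) f U = tau i f U" .
qed

lemma ext_s_mult:
  assumes i: "1 \<le> i" "i < n" and f: "supn n f" and g: "supn n g"
  shows "ext_s i (ext_mult f g) = ext_mult (ext_s i f) (ext_s i g)"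
proof -
  have sf: "supn n (sig i f)" using f by (rule sup_sig)
  have sg: "supn n (sig i g)" using g by (rule sup_sig)
  have sfg: "supn n (ext_mult (sig i f) (sig i g))" using sf sg by (rule sup_mult)
  have "ext_s i (ext_mult f g) = tau i (ext_mult (sig i f) (sig i g))"
    unfolding ext_s_decomp sig_mult ..
  also have "\<dots> = ext_eval n (vgen i) (ext_mult (sig i f) (sig i g))"
    by (rule tau_eval[OF i sfg, symmetric])
  also have "\<dots> = ext_mult (ext_eval n (vgen i) (sig i f)) (ext_eval n (vgen i) (sig i g))"
    by (rule eval_mult[OF oddfam_vgen])
  also have "\<dots> = ext_mult (ext_s i f) (ext_s i g)"
    unfolding ext_s_decomp tau_eval[OF i sf] tau_eval[OF i sg] ..
  finally show ?thesis .
qed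

lemma ext_s_one: "ext_s i ext_one = ext_one"
  by (rule ext) (auto simp: ext_s_def ext_one_def)

lemma monom_invariant:
  assumes i: "1 \<le> i" "i < n" and fS: "finite S"
    and w: "\<And>j. j \<in> S \<Longrightarrow> supn n (w j) \<and> ext_s i (w j) = w j"
  shows "ext_s i (ext_monom w S) = ext_monom w S"
proof -
  have "\<forall>j\<in>set xs. supn n (w j) \<and> ext_s i (w j) = w j \<Longrightarrow>
    supn n (foldr ext_mult (map w xs) ext_one) \<and>
    ext_s i (foldr ext_mult (map w xs) ext_one) = foldr ext_mult (map w xs) ext_one" for xs
    by (induction xs) (auto simp: ext_s_one ext_s_mult[OF i])
  then show ?thesis unfolding ext_monom_def
    using w fS by simp
qed

lemma ext_s_eval:
  "ext_s i (\<lambda>U. \<Sum>S\<in>A. ext_scale (c S) (F S) U) = (\<lambda>U. \<Sum>S\<in>A. ext_scale (swap_vars i (c S)) (ext_s i (F S)) U)"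
proof
  fix U
  show "ext_s i (\<lambda>U. \<Sum>S\<in>A. ext_scale (c S) (F S) U) U = (\<Sum>S\<in>A. ext_scale (swap_vars i (c S)) (ext_s i (F S)) U)"
  proof (cases "i + 1 \<in> U \<and> i \<notin> U")
    case True
    show ?thesis unfolding ext_s_def ext_scale_def if_P[OF True] swap_sum swap_mult
      by (simp add: distrib_left sum.distrib sum_distrib_left mult.left_commute)
  next
    case False
    show ?thesis unfolding ext_s_def ext_scale_def if_not_P[OF False] swap_sum swap_mult
      by simp
  qed
qed




lemma monom_cong: "finite S \<Longrightarrow> (\<And>j. j \<in> S \<Longrightarrow> w j = w' j) \<Longrightarrow> ext_monom w S = ext_monom w' S"
  unfolding ext_monom_def by (metis map_eq_conv set_sorted_list_of_set)

lemma eval_cong: "(\<And>j. j \<in> {1..n} \<Longrightarrow> w j = w' j) \<Longrightarrow> ext_eval n w = ext_eval n w'"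
proof -
  assume a: "\<And>j. j \<in> {1..n} \<Longrightarrow> w j = w' j"
  have "ext_monom w S = ext_monom w' S" if "S \<in> Pow {1..n}" for S
    using that a by (intro monom_cong) (auto intro: finite_subset)
  then show ?thesis unfolding ext_eval_def by (intro ext sum.cong refl) simp
qed

lemma sum_remove_nat: "finite U \<Longrightarrow> j \<in> U \<Longrightarrow> (\<Sum>x\<in>U. x) = j + (\<Sum>x\<in>U - {j}. (x::nat))"
  by (simp add: sum.remove)

locale trif =
  fixes n :: nat and w :: "nat \<Rightarrow> ext"
  assumes tri: "triangular_family n w" and winv: "\<forall>i\<in>{1..n}. w i \<in> LamOmega n"
begin

definition w' :: "nat \<Rightarrow> ext" where
  "w' j = (if j \<in> {1..n} then w j else ext_gen j)"

lemma w_shape: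
  assumes a: "a \<in> {1..n}"
  shows "w a {a} = 1" "w a S \<noteq> 0 \<Longrightarrow> \<exists>j. S = {j} \<and> a \<le> j"
proof -
  obtain c where c: "w a = ext_add (ext_gen a) (\<lambda>S. \<Sum>j \<in> {a<..n}. ext_scale (c j) (ext_gen j) S)"
    using tri a unfolding triangular_family_def by blast
  have e: "w a S = (if S = {a} then 1 else 0) + (\<Sum>j \<in> {a<..n}. c j * (if S = {j} then 1 else 0))" for S
    by (simp only: c ext_add_def ext_scale_def ext_gen_def)
  have "(\<Sum>j \<in> {a<..n}. c j * (if {a} = {j} then 1 else 0)) = 0"
    by (rule sum.neutral) auto
  then show "w a {a} = 1" unfolding e by simp
  show "w a S \<noteq> 0 \<Longrightarrow> \<exists>j. S = {j} \<and> a \<le> j"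
  proof (rule ccontr)
    assume nz: "w a S \<noteq> 0" and nj: "\<nexists>j. S = {j} \<and> a \<le> j"
    have "(\<Sum>j \<in> {a<..n}. c j * (if S = {j} then 1 else 0)) = 0"
      by (rule sum.neutral) (use nj in auto)
    moreover have "S \<noteq> {a}" using nj by auto
    ultimately have "w a S = 0" unfolding e by simp
    then show False using nz by simp
  qed
qed

lemma w_odd: "a \<in> {1..n} \<Longrightarrow> oddv (w a)"
  unfolding oddv_def using w_shape(2) by blast

lemma oddfam_w': "oddfam w'"
  unfolding oddfam_def w'_def using w_odd oddv_gen by auto

lemma w_carrier: "a \<in> {1..n} \<Longrightarrow> w a \<in> ext_carrier n (Pn n)"
  using winv by (simp add: LamOmega_def)

lemma w_inv: "a \<in> {1..n} \<Longrightarrow> 1 \<le> i \<Longrightarrow> i < n \<Longrightarrow> ext_s i (w a) = w a"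
  using winv by (simp add: LamOmega_def)

lemma w_sup: "a \<in> {1..n} \<Longrightarrow> supn n (w a)"
  using w_carrier by (simp add: carrier_iff)

lemma eval_w': "ext_eval n w = ext_eval n w'"
  by (rule eval_cong) (simp add: w'_def)

lemma finP: "S \<in> Pow {1..n} \<Longrightarrow> finite S"
  by (auto intro: finite_subset)

lemma monom_carrier: "S \<in> Pow {1..n} \<Longrightarrow> ext_monom w S \<in> ext_carrier n (Pn n)"
proof (intro carrier_monom)
  assume S: "S \<in> Pow {1..n}"
  then show "finite S" by (rule finP)
  fix j assume "j \<in> S" then show "w j \<in> ext_carrier n (Pn n)" using S by (intro w_carrier) auto
qed

lemma monom_sup: "S \<in> Pow {1..n} \<Longrightarrow> supn n (ext_monom w S)"
  using monom_carrier by (simp add: carrier_iff)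

lemma monom_tri:
  assumes S: "S \<subseteq> {1..n}"
  shows "ext_monom w S S = 1 \<and> (\<forall>U. ext_monom w S U \<noteq> 0 \<longrightarrow> U = S \<or> (\<Sum>x\<in>S. x) < (\<Sum>x\<in>U. x))"
proof -
  have "finite S" using S by (auto intro: finite_subset)
  then show ?thesis using S
  proof (induction S rule: finite_linorder_min_induct)
    case empty
    then show ?case by (auto simp: ext_one_def)
  next
    case (insert a V)
    have a: "a \<in> {1..n}" and V: "V \<subseteq> {1..n}" using insert(4) by auto
    have aV: "a \<notin> V" using insert(2) by auto
    have IH: "ext_monom w V V = 1" "\<And>U. ext_monom w V U \<noteq> 0 \<Longrightarrow> U = V \<or> (\<Sum>x\<in>V. x) < (\<Sum>x\<in>U. x)"
      using insert(3)[OF V] by auto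
    have m: "ext_monom w (insert a V) = ext_mult (w a) (ext_monom w V)"
      using insert(1,2) by (rule monom_insert)
    have ex: "ext_monom w (insert a V) U = (\<Sum>j\<in>U. ext_sign {j} (U - {j}) * w a {j} * ext_monom w V (U - {j}))"
      if "finite U" for U unfolding m by (rule mult_odd_left[OF w_odd[OF a] that])
    have sV: "(\<Sum>x\<in>insert a V. x) = a + (\<Sum>x\<in>V. x)" using insert(1) aV by simp
    show ?case
    proof (intro conjI allI impI)
      let ?U = "insert a V"
      have "ext_monom w ?U ?U = ext_sign {a} (?U - {a}) * w a {a} * ext_monom w V (?U - {a})"
        unfolding ex[OF finite.insertI[OF insert(1)]]
      proof (rule sum_only)
        show "finite ?U" using insert(1) by simp
        show "a \<in> ?U" by simp
        fix j assume j: "j \<in> ?U" "j \<noteq> a"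
        then have jV: "j \<in> V" "a < j" using insert(2) by auto
        have "ext_monom w V (?U - {j}) = 0"
        proof (rule ccontr)
          assume "ext_monom w V (?U - {j}) \<noteq> 0"
          then have "?U - {j} = V \<or> (\<Sum>x\<in>V. x) < (\<Sum>x\<in>?U - {j}. x)" using IH(2) by blast
          moreover have "?U - {j} \<noteq> V" using aV jV by auto
          moreover have "(\<Sum>x\<in>?U. x) = j + (\<Sum>x\<in>?U - {j}. x)"
            using insert(1) j by (intro sum_remove_nat) auto
          ultimately show False using sV jV by linarith
        qed
        then show "ext_sign {j} (?U - {j}) * w a {j} * ext_monom w V (?U - {j}) = 0" by simp
      qed
      also have "\<dots> = 1"
      proof -
        have "?U - {a} = V" using aV by auto
        moreover have "ext_sign {a} V = 1"
          using insert(1,2) by (simp add: ext_sign_inv inv_single_left card_less_empty)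
        ultimately show ?thesis using IH(1) w_shape(1)[OF a] by simp
      qed
      finally show "ext_monom w ?U ?U = 1" .
    next
      fix U assume nz: "ext_monom w (insert a V) U \<noteq> 0"
      have fU: "finite U"
      proof (rule ccontr)
        assume "infinite U" then show False using nz m by (simp add: mult_infinite)
      qed
      obtain j where j: "j \<in> U" "ext_sign {j} (U - {j}) * w a {j} * ext_monom w V (U - {j}) \<noteq> 0"
        using nz unfolding ex[OF fU] by (meson sum.neutral)
      have wj: "w a {j} \<noteq> 0" and gj: "ext_monom w V (U - {j}) \<noteq> 0" using j by auto
      have aj: "a \<le> j" using w_shape(2)[OF a wj] by auto
      have sU: "(\<Sum>x\<in>U. x) = j + (\<Sum>x\<in>U - {j}. x)" using fU j by (intro sum_remove_nat)
      show "U = insert a V \<or> (\<Sum>x\<in>insert a V. x) < (\<Sum>x\<in>U. x)"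
      proof (cases "U - {j} = V \<and> j = a")
        case True
        then have "U = insert a V" using j by auto
        then show ?thesis by simp
      next
        case False
        then have "U - {j} \<noteq> V \<or> a < j" using aj by auto
        then show ?thesis using IH(2)[OF gj] sU sV aj by auto
      qed
    qed
  qed
qed

lemma ev_unfold: "ext_eval n w c U = (\<Sum>T\<in>Pow {1..n}. c T * ext_monom w T U)"
  by (simp add: ext_eval_def ext_scale_def)

lemma ev_add: "ext_eval n w (\<lambda>S. c S + d S) U = ext_eval n w c U + ext_eval n w d U"
  unfolding ev_unfold by (simp add: sum.distrib distrib_right)

lemma ev_diff: "ext_eval n w (\<lambda>S. c S - d S) U = ext_eval n w c U - ext_eval n w d U"
  unfolding ev_unfold by (simp add: sum_subtractf left_diff_distrib)

lemma ev_zero_coeff: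
  assumes z: "\<And>U. ext_eval n w c U = 0"
  shows "S \<in> Pow {1..n} \<Longrightarrow> c S = 0"
proof (rule ccontr)
  assume S: "S \<in> Pow {1..n}" and cS: "c S \<noteq> 0"
  let ?Q = "\<lambda>T. T \<in> Pow {1..n} \<and> c T \<noteq> 0"
  have "\<exists>T0. ?Q T0 \<and> (\<forall>T. ?Q T \<longrightarrow> (\<Sum>x\<in>T0. x) \<le> (\<Sum>x\<in>T. x))"
    by (rule ex_has_least_nat[of ?Q S]) (use S cS in simp)
  then obtain T0 where T0: "?Q T0" and min: "\<forall>T. ?Q T \<longrightarrow> (\<Sum>x\<in>T0. x) \<le> (\<Sum>x\<in>T. x)"
    by blast
  have "ext_eval n w c T0 = c T0 * ext_monom w T0 T0"
    unfolding ev_unfold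
  proof (rule sum_only)
    show "finite (Pow {1..n})" by simp
    show "T0 \<in> Pow {1..n}" using T0 by simp
    fix T assume T: "T \<in> Pow {1..n}" "T \<noteq> T0"
    show "c T * ext_monom w T T0 = 0"
    proof (rule ccontr)
      assume "c T * ext_monom w T T0 \<noteq> 0"
      then have cT: "c T \<noteq> 0" and mT: "ext_monom w T T0 \<noteq> 0" by auto
      have "T0 = T \<or> (\<Sum>x\<in>T. x) < (\<Sum>x\<in>T0. x)" using monom_tri[of T] T(1) mT by blast
      then have lt: "(\<Sum>x\<in>T. x) < (\<Sum>x\<in>T0. x)" using T(2) by blast
      have "?Q T" using T(1) cT by blast
      then have "(\<Sum>x\<in>T0. x) \<le> (\<Sum>x\<in>T. x)" using min by blast
      then show False using lt by linarith
    qed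
  qed
  also have "\<dots> = c T0" using monom_tri[of T0] T0 by simp
  finally show False using z T0 by simp
qed

lemma ev_inj_coeff:
  assumes "\<And>U. ext_eval n w c U = ext_eval n w d U"
  shows "S \<in> Pow {1..n} \<Longrightarrow> c S = d S"
  using ev_zero_coeff[of "\<lambda>S. c S - d S" S] assms by (simp add: ev_diff)

lemma ev_carrier:
  assumes "c \<in> ext_carrier n (Pn n)"
  shows "ext_eval n w c \<in> ext_carrier n (Pn n)"
  unfolding carrier_iff
proof (intro conjI allI impI)
  show "supn n (ext_eval n w c)"
    unfolding supn_def ev_unfold using monom_sup by (auto simp: supn_def intro!: sum.neutral)
  fix U assume U: "U \<subseteq> {1..n}"
  show "ext_eval n w c U \<in> Pn n" unfolding ev_unfold
    using assms monom_carrier U by (intro Pn_sum Pn_mult) (auto simp: carrier_iff)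
qed

lemma span_step:
  assumes f: "f \<in> ext_carrier n (Pn n)" and supp: "\<And>U. f U \<noteq> 0 \<Longrightarrow> k \<le> (\<Sum>x\<in>U. x)"
  shows "\<exists>c0 \<in> ext_carrier n (Pn n). (\<lambda>U. f U - ext_eval n w c0 U) \<in> ext_carrier n (Pn n) \<and>
     (\<forall>U. f U - ext_eval n w c0 U \<noteq> 0 \<longrightarrow> Suc k \<le> (\<Sum>x\<in>U. x))"
proof -
  let ?P = "Pow {1..n}"
  define c0 where "c0 S = (if S \<in> ?P \<and> (\<Sum>x\<in>S. x) = k then f S else 0)" for S
  have c0: "c0 \<in> ext_carrier n (Pn n)" using f by (auto simp: carrier_iff c0_def supn_def)
  have ec: "ext_eval n w c0 \<in> ext_carrier n (Pn n)" by (rule ev_carrier[OF c0])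
  have car: "(\<lambda>U. f U - ext_eval n w c0 U) \<in> ext_carrier n (Pn n)"
    using f ec by (auto simp: carrier_iff supn_def)
  have supp': "Suc k \<le> (\<Sum>x\<in>U. x)" if nz: "f U - ext_eval n w c0 U \<noteq> 0" for U
  proof (rule ccontr)
    assume "\<not> Suc k \<le> (\<Sum>x\<in>U. x)"
    then have le: "(\<Sum>x\<in>U. x) \<le> k" by simp
    show False
    proof (cases "U \<in> ?P \<and> (\<Sum>x\<in>U. x) = k")
      case True
      have "ext_eval n w c0 U = c0 U * ext_monom w U U"
        unfolding ev_unfold
      proof (rule sum_only)
        show "finite ?P" by simp
        show "U \<in> ?P" using True by simp
        fix T assume T: "T \<in> ?P" "T \<noteq> U"
        show "c0 T * ext_monom w T U = 0"
        proof (rule ccontr)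
          assume "c0 T * ext_monom w T U \<noteq> 0"
          then have cT: "c0 T \<noteq> 0" and mT: "ext_monom w T U \<noteq> 0" by auto
          have k: "(\<Sum>x\<in>T. x) = k" using cT unfolding c0_def by (auto split: if_splits)
          have "U = T \<or> (\<Sum>x\<in>T. x) < (\<Sum>x\<in>U. x)" using monom_tri[of T] T(1) mT by blast
          then show False using True k T(2) by auto
        qed
      qed
      also have "\<dots> = f U" using monom_tri[of U] True by (simp add: c0_def)
      finally show False using nz by simp
    next
      case False
      have "ext_eval n w c0 U = 0"
        unfolding ev_unfold
      proof (rule sum.neutral, rule ballI)
        fix T assume T: "T \<in> ?P"
        show "c0 T * ext_monom w T U = 0"
        proof (rule ccontr)
          assume "c0 T * ext_monom w T U \<noteq> 0"
          then have cT: "c0 T \<noteq> 0" and mT: "ext_monom w T U \<noteq> 0" by auto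
          have k: "(\<Sum>x\<in>T. x) = k" using cT unfolding c0_def by (auto split: if_splits)
          have "U = T \<or> (\<Sum>x\<in>T. x) < (\<Sum>x\<in>U. x)" using monom_tri[of T] T(1) mT by blast
          then show False using False T k le by auto
        qed
      qed
      moreover have "f U = 0"
      proof (cases "U \<in> ?P")
        case True
        then have "(\<Sum>x\<in>U. x) < k" using False le by simp
        then show ?thesis using supp by (meson not_le)
      next
        case False
        then show ?thesis using f by (simp add: carrier_iff supn_def)
      qed
      ultimately show False using nz by simp
    qed
  qed
  show ?thesis using c0 car supp' by blast
qed

lemma span:
  assumes f: "f \<in> ext_carrier n (Pn n)"
  shows "\<exists>c \<in> ext_carrier n (Pn n). ext_eval n w c = f"
proof -
  let ?N = "\<Sum>x\<in>{1..n}. x"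
  have "\<forall>f \<in> ext_carrier n (Pn n). (\<forall>U. f U \<noteq> 0 \<longrightarrow> k \<le> (\<Sum>x\<in>U. x)) \<longrightarrow>
      (\<exists>c \<in> ext_carrier n (Pn n). ext_eval n w c = f)" if "k \<le> Suc ?N" for k
    using that
  proof (induction k rule: inc_induct)
    case base
    show ?case
    proof (intro ballI impI)
      fix f assume f: "f \<in> ext_carrier n (Pn n)" and s: "\<forall>U. f U \<noteq> 0 \<longrightarrow> Suc ?N \<le> (\<Sum>x\<in>U. x)"
      have "f = (\<lambda>_. 0)"
      proof
        fix U
        show "f U = 0"
        proof (rule ccontr)
          assume nz: "f U \<noteq> 0"
          then have "U \<subseteq> {1..n}" using f by (auto simp: carrier_iff supn_def)
          then have "(\<Sum>x\<in>U. x) \<le> ?N" by (intro sum_mono2) auto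
          then show False using s nz by fastforce
        qed
      qed
      moreover have "ext_eval n w (\<lambda>_. 0) = (\<lambda>_. 0)" by (simp add: ev_unfold[abs_def])
      moreover have "(\<lambda>_. 0) \<in> ext_carrier n (Pn n)" by (simp add: carrier_iff supn_def)
      ultimately show "\<exists>c \<in> ext_carrier n (Pn n). ext_eval n w c = f" by metis
    qed
  next
    case (step k)
    show ?case
    proof (intro ballI impI)
      fix f assume f: "f \<in> ext_carrier n (Pn n)" and s: "\<forall>U. f U \<noteq> 0 \<longrightarrow> k \<le> (\<Sum>x\<in>U. x)"
      obtain c0 where c0: "c0 \<in> ext_carrier n (Pn n)"
        and car: "(\<lambda>U. f U - ext_eval n w c0 U) \<in> ext_carrier n (Pn n)"
        and s': "\<forall>U. f U - ext_eval n w c0 U \<noteq> 0 \<longrightarrow> Suc k \<le> (\<Sum>x\<in>U. x)"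
        using span_step[OF f] s by blast
      have "(\<forall>U. (\<lambda>U. f U - ext_eval n w c0 U) U \<noteq> 0 \<longrightarrow> Suc k \<le> (\<Sum>x\<in>U. x)) \<longrightarrow>
        (\<exists>c \<in> ext_carrier n (Pn n). ext_eval n w c = (\<lambda>U. f U - ext_eval n w c0 U))"
        by (rule bspec[OF step.IH car])
      then obtain c1 where c1: "c1 \<in> ext_carrier n (Pn n)" and e1: "ext_eval n w c1 = (\<lambda>U. f U - ext_eval n w c0 U)"
        using s' by auto
      have "ext_eval n w (\<lambda>S. c0 S + c1 S) = f"
        by (rule ext) (simp add: ev_add e1)
      moreover have "(\<lambda>S. c0 S + c1 S) \<in> ext_carrier n (Pn n)"
        using c0 c1 by (auto simp: carrier_iff supn_def)
      ultimately show "\<exists>c \<in> ext_carrier n (Pn n). ext_eval n w c = f" by blast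
    qed
  qed
  then show ?thesis using f by blast
qed

end




context trif
begin

lemma monom_inv: "S \<in> Pow {1..n} \<Longrightarrow> 1 \<le> i \<Longrightarrow> i < n \<Longrightarrow> ext_s i (ext_monom w S) = ext_monom w S"
proof (rule monom_invariant)
  assume S: "S \<in> Pow {1..n}" and i: "1 \<le> i" "i < n"
  show "1 \<le> i" "i < n" using i by auto
  show "finite S" using S by (rule finP)
  fix j assume "j \<in> S"
  then have j: "j \<in> {1..n}" using S by auto
  show "supn n (w j) \<and> ext_s i (w j) = w j" using w_sup[OF j] w_inv[OF j i] by simp
qed

lemma ext_s_ev: "1 \<le> i \<Longrightarrow> i < n \<Longrightarrow> ext_s i (ext_eval n w c) = ext_eval n w (\<lambda>S. swap_vars i (c S))"
  unfolding ext_eval_def ext_s_eval by (intro ext sum.cong refl) (simp add: monom_inv)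

lemma Lam_carrier_Pn: "c \<in> ext_carrier n (Lam n) \<Longrightarrow> c \<in> ext_carrier n (Pn n)"
  by (auto simp: carrier_iff Lam_iff)

lemma ev_LamOmega: "c \<in> ext_carrier n (Lam n) \<Longrightarrow> ext_eval n w c \<in> LamOmega n"
  unfolding LamOmega_def
proof (intro CollectI conjI allI impI)
  assume c: "c \<in> ext_carrier n (Lam n)"
  show "ext_eval n w c \<in> ext_carrier n (Pn n)" by (rule ev_carrier[OF Lam_carrier_Pn[OF c]])
  fix i assume i: "1 \<le> i \<and> i < n"
  have "ext_eval n w (\<lambda>S. swap_vars i (c S)) = ext_eval n w c"
    unfolding ext_eval_def
  proof (intro ext sum.cong refl)
    fix S U assume "S \<in> Pow {1..n}"
    then have "swap_vars i (c S) = c S" using c i by (auto simp: carrier_iff Lam_iff)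
    then show "ext_scale (swap_vars i (c S)) (ext_monom w S) U = ext_scale (c S) (ext_monom w S) U" by simp
  qed
  then show "ext_s i (ext_eval n w c) = ext_eval n w c" using i by (simp add: ext_s_ev)
qed

lemma ev_surj:
  assumes f: "f \<in> LamOmega n"
  shows "\<exists>c \<in> ext_carrier n (Lam n). ext_eval n w c = f"
proof -
  have fc: "f \<in> ext_carrier n (Pn n)" using f by (simp add: LamOmega_def)
  obtain c where c: "c \<in> ext_carrier n (Pn n)" and e: "ext_eval n w c = f" using span[OF fc] by blast
  have "c \<in> ext_carrier n (Lam n)"
    unfolding carrier_iff
  proof (intro conjI allI impI)
    show "supn n c" using c by (simp add: carrier_iff)
    fix S assume S: "S \<subseteq> {1..n}"
    have "\<forall>i. 1 \<le> i \<and> i < n \<longrightarrow> swap_vars i (c S) = c S"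
    proof (intro allI impI)
      fix i assume i: "1 \<le> i \<and> i < n"
      have "ext_s i f = f" using f i by (simp add: LamOmega_def)
      then have "ext_eval n w (\<lambda>S. swap_vars i (c S)) = ext_eval n w c"
        using i e by (simp add: ext_s_ev[symmetric])
      then show "swap_vars i (c S) = c S"
        using ev_inj_coeff[of "\<lambda>S. swap_vars i (c S)" c S] S by simp
    qed
    then show "c S \<in> Lam n" using c S by (simp add: carrier_iff Lam_iff)
  qed
  then show ?thesis using e by blast
qed

lemma ev_inj: "inj_on (ext_eval n w) (ext_carrier n (Lam n))"
proof (rule inj_onI)
  fix c d assume c: "c \<in> ext_carrier n (Lam n)" and d: "d \<in> ext_carrier n (Lam n)"
    and e: "ext_eval n w c = ext_eval n w d"
  show "c = d"
  proof
    fix S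
    show "c S = d S"
    proof (cases "S \<subseteq> {1..n}")
      case True then show ?thesis using ev_inj_coeff[of c d S] e by simp
    next
      case False then show ?thesis using c d by (simp add: carrier_iff supn_def)
    qed
  qed
qed

lemma ev_bij: "bij_betw (ext_eval n w) (ext_carrier n (Lam n)) (LamOmega n)"
  unfolding bij_betw_def
proof
  show "inj_on (ext_eval n w) (ext_carrier n (Lam n))" by (rule ev_inj)
  show "ext_eval n w ` ext_carrier n (Lam n) = LamOmega n"
    using ev_LamOmega ev_surj by blast
qed

lemma ev_one: "ext_eval n w ext_one = ext_one"
proof
  fix U
  have "ext_eval n w ext_one U = ext_one {} * ext_monom w {} U"
    unfolding ev_unfold by (rule sum_only) (auto simp: ext_one_def)
  then show "ext_eval n w ext_one U = ext_one U" by (simp add: ext_one_def)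
qed

lemma ev_add_ext: "ext_eval n w (ext_add c d) = ext_add (ext_eval n w c) (ext_eval n w d)"
  by (rule ext) (simp add: ext_add_def ev_add)

lemma ev_mult_ext: "ext_eval n w (ext_mult c d) = ext_mult (ext_eval n w c) (ext_eval n w d)"
  unfolding eval_w' by (rule eval_mult[OF oddfam_w'])

lemma ev_monom_coeff: "S \<in> Pow {1..n} \<Longrightarrow> ext_eval n w (\<lambda>T. if T = S then 1 else 0) = ext_monom w S"
proof
  fix U assume S: "S \<in> Pow {1..n}"
  have "ext_eval n w (\<lambda>T. if T = S then 1 else 0) U = (if S = S then 1 else 0) * ext_monom w S U"
    unfolding ev_unfold using S by (intro sum_only) auto
  then show "ext_eval n w (\<lambda>T. if T = S then 1 else 0) U = ext_monom w S U" by simp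
qed

end




fun esym :: "nat \<Rightarrow> nat \<Rightarrow> mpoly" where
  "esym 0 m = 1"
| "esym (Suc k) 0 = 0"
| "esym (Suc k) (Suc m) = esym (Suc k) m + Var (Suc m) * esym k m"

lemma esym_Pn: "m \<le> n \<Longrightarrow> esym k m \<in> Pn n"
  by (induction k m rule: esym.induct) auto

lemma esym_swap_gt: "m < j \<Longrightarrow> swap_vars j (esym k m) = esym k m"
proof (induction k m rule: esym.induct)
  case (3 k m)
  have "tr j (Suc m) = Suc m" using 3 by (auto simp: tr_def)
  then show ?case using 3 by simp
qed auto

lemma esym_swap_lt: "1 \<le> j \<Longrightarrow> j < m \<Longrightarrow> swap_vars j (esym k m) = esym k m"
proof (induction m arbitrary: k)
  case 0 then show ?case by simp
next
  case (Suc m)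
  show ?case
  proof (cases k)
    case 0 then show ?thesis by simp
  next
    case (Suc k')
    show ?thesis
    proof (cases "j < m")
      case True
      have "tr j (Suc m) = Suc m" using True by (auto simp: tr_def)
      then show ?thesis using Suc.IH[OF Suc.prems(1) True] \<open>k = Suc k'\<close> by simp
    next
      case False
      then have jm: "j = m" using Suc.prems by simp
      then obtain m' where m': "m = Suc m'" using Suc.prems by (cases m) auto
      have g: "swap_vars j (esym q m') = esym q m'" for q using jm m' by (intro esym_swap_gt) simp
      have t1: "tr j (Suc m) = m" "tr j m = Suc m" using jm by (auto simp: tr_def)
      show ?thesis
      proof (cases k')
        case 0
        have "esym k (Suc m) = esym 1 m' + Var m + Var (Suc m)"
          using \<open>k = Suc k'\<close> 0 m' by simp
        then show ?thesis using g t1 m' by (simp add: algebra_simps)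
      next
        case (Suc k'')
        have "esym k (Suc m) = esym (Suc (Suc k'')) m' + Var m * esym (Suc k'') m'
            + Var (Suc m) * (esym (Suc k'') m' + Var m * esym k'' m')"
          using \<open>k = Suc k'\<close> Suc m' by simp
        then show ?thesis using g t1 m' by (simp add: algebra_simps)
      qed
    qed
  qed
qed

lemma esym_swap: "1 \<le> j \<Longrightarrow> j \<noteq> m \<Longrightarrow> swap_vars j (esym k m) = esym k m"
  using esym_swap_gt esym_swap_lt by (cases "j < m") auto

lemma esym_rec:
  assumes "1 \<le> m"
  shows "esym (Suc k) m = swap_vars m (esym (Suc k) m) + (Var m - Var (m + 1)) * esym k (m - 1)"
proof -
  obtain m' where m': "m = Suc m'" using assms by (cases m) auto
  have g: "swap_vars m (esym q m') = esym q m'" for q using m' by (intro esym_swap_gt) simp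
  have t: "tr m m = Suc m" by (simp add: tr_def)
  show ?thesis using g t m' by (simp add: algebra_simps)
qed

definition cf :: "nat \<Rightarrow> nat \<Rightarrow> nat \<Rightarrow> mpoly" where
  "cf n i j = (if j \<le> n then esym (j - i) (j - 1) else 0)"

definition Wt :: "nat \<Rightarrow> nat \<Rightarrow> ext" where
  "Wt n i = ext_add (ext_gen i) (\<lambda>S. \<Sum>j \<in> {i<..n}. ext_scale (cf n i j) (ext_gen j) S)"

lemma Wt_tri: "triangular_family n (Wt n)"
  unfolding triangular_family_def Wt_def
proof (intro ballI exI conjI allI)
  fix i j show "cf n i j \<in> Pn n" by (simp add: cf_def esym_Pn)
qed simp

lemma Wt_val: "Wt n i S = (if S = {i} then 1 else 0) + (\<Sum>j \<in> {i<..n}. cf n i j * (if S = {j} then 1 else 0))"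
  by (simp only: Wt_def ext_add_def ext_scale_def ext_gen_def)

lemma Wt_single:
  assumes i: "i \<in> {1..n}"
  shows "Wt n i {l} = (if i \<le> l \<and> l \<le> n then esym (l - i) (l - 1) else 0)"
proof -
  have s: "(\<Sum>j \<in> {i<..n}. cf n i j * (if {l} = {j} then 1 else 0)) = (if l \<in> {i<..n} then cf n i l else 0)"
    by (simp add: if_distrib[of "\<lambda>x. _ * x"] sum.delta cong: if_cong)
  show ?thesis unfolding Wt_val s using i by (auto simp: cf_def)
qed

lemma Wt_nonsingle: "\<nexists>l. S = {l} \<Longrightarrow> Wt n i S = 0"
  unfolding Wt_val by (auto intro!: sum.neutral)

lemma Wt_LamOmega:
  assumes i: "i \<in> {1..n}"
  shows "Wt n i \<in> LamOmega n"
  unfolding LamOmega_def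
proof (intro CollectI conjI allI impI)
  show "Wt n i \<in> ext_carrier n (Pn n)"
    unfolding carrier_iff supn_def
  proof (intro conjI allI impI)
    fix S assume S: "\<not> S \<subseteq> {1..n}"
    show "Wt n i S = 0"
    proof (cases "\<exists>l. S = {l}")
      case True
      then obtain l where l: "S = {l}" by blast
      then have "\<not> (i \<le> l \<and> l \<le> n)" using S i by auto
      then show ?thesis unfolding l Wt_single[OF i] by (rule if_not_P)
    qed (rule Wt_nonsingle)
  next
    fix S assume S: "S \<subseteq> {1..n}"
    show "Wt n i S \<in> Pn n"
    proof (cases "\<exists>l. S = {l}")
      case True
      then obtain l where l: "S = {l}" by blast
      then show ?thesis using Wt_single[OF i] by (auto intro: esym_Pn)
    qed (simp add: Wt_nonsingle)
  qed
next
  fix i' assume i': "1 \<le> i' \<and> i' < n"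
  let ?f = "Wt n i"
  let ?c = "Var i' - Var (i' + 1)"
  show "ext_s i' ?f = ?f"
  proof
    fix U
    show "ext_s i' ?f U = ?f U"
    proof (cases "\<exists>l. U = {l}")
      case False
      have f0: "?f U = 0" using False by (rule Wt_nonsingle)
      have "?f (insert i' (U - {i' + 1})) = 0" if "i' + 1 \<in> U" "i' \<notin> U"
      proof (rule Wt_nonsingle, rule notI)
        assume "\<exists>l. insert i' (U - {i' + 1}) = {l}"
        then obtain l where "insert i' (U - {i' + 1}) = {l}" by blast
        then have "U - {i' + 1} = {}" using that by auto
        then have "U = {i' + 1}" using that by auto
        then show False using False by blast
      qed
      then show ?thesis unfolding ext_s_def f0 by simp
    next
      case True
      then obtain l where l: "U = {l}" by blast
      show ?thesis
      proof (cases "l = i' + 1")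
        case False
        have "swap_vars i' (?f {l}) = ?f {l}"
        proof (cases "i \<le> l \<and> l \<le> n")
          case True
          have "i' \<noteq> l - 1" using False True i by auto
          then show ?thesis using Wt_single[OF i] True i' by (simp add: esym_swap)
        next
          case F: False
          then show ?thesis unfolding Wt_single[OF i] if_not_P[OF F] by simp
        qed
        then show ?thesis unfolding ext_s_def l using False by simp
      next
        case True
        have ins: "insert i' ({l} - {i' + 1}) = {i'}" using True by auto
        have cond: "i' + 1 \<in> {l} \<and> i' \<notin> {l}" using True by simp
        have "?f {l} = swap_vars i' (?f {l}) + ?c * swap_vars i' (?f {i'})"
        proof (cases "i \<le> i'")
          case True
          have e1: "?f {l} = esym (Suc (i' - i)) i'"
            using Wt_single[OF i, of l] \<open>l = i' + 1\<close> True i' by (simp add: Suc_diff_le)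
          have e2: "?f {i'} = esym (i' - i) (i' - 1)"
            using Wt_single[OF i, of i'] True i' by simp
          have s2: "swap_vars i' (esym (i' - i) (i' - 1)) = esym (i' - i) (i' - 1)"
            using i' by (intro esym_swap_gt) simp
          show ?thesis unfolding e1 e2 s2 using esym_rec[of i' "i' - i"] i' by simp
        next
          case False
          have e2: "?f {i'} = 0" using Wt_single[OF i, of i'] False by simp
          show ?thesis
          proof (cases "i = i' + 1")
            case True
            have "?f {l} = 1" using Wt_single[OF i, of l] \<open>l = i' + 1\<close> True i' by simp
            then show ?thesis using e2 by simp
          next
            case F2: False
            have "?f {l} = 0" using Wt_single[OF i, of l] \<open>l = i' + 1\<close> False F2 by simp
            then show ?thesis using e2 by simp
          qed
        qed
        then show ?thesis unfolding ext_s_def l if_P[OF cond] ins by (rule sym)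
      qed
    qed
  qed
qed

lemma exists_w: "\<exists>w. triangular_family n w \<and> (\<forall>i \<in> {1..n}. w i \<in> LamOmega n)"
  using Wt_tri Wt_LamOmega by blast




theorem theorem3p1:
  fixes n :: nat
  shows "(\<exists>(I :: nat set set) (b :: nat set \<Rightarrow> ext).
            finite I \<and> card I = 2 ^ n \<and> (\<forall>S \<in> I. b S \<in> LamOmega n) \<and>
            bij_betw (\<lambda>c. (\<lambda>U. \<Sum>S \<in> I. ext_scale (c S) (b S) U))
              {c. (\<forall>S \<in> I. c S \<in> Lam n) \<and> (\<forall>S. S \<notin> I \<longrightarrow> c S = 0)}
              (LamOmega n))
      \<and> (\<exists>w. triangular_family n w \<and> (\<forall>i \<in> {1..n}. w i \<in> LamOmega n))
      \<and> (\<forall>w. triangular_family n w \<and> (\<forall>i \<in> {1..n}. w i \<in> LamOmega n) \<longrightarrow>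
            bij_betw (ext_eval n w) (ext_carrier n (Lam n)) (LamOmega n) \<and>
            ext_eval n w ext_one = ext_one \<and>
            (\<forall>c \<in> ext_carrier n (Lam n). \<forall>d \<in> ext_carrier n (Lam n).
               ext_eval n w (ext_add c d) = ext_add (ext_eval n w c) (ext_eval n w d) \<and>
               ext_eval n w (ext_mult c d) = ext_mult (ext_eval n w c) (ext_eval n w d)))"
proof (intro conjI)
  show ex: "\<exists>w. triangular_family n w \<and> (\<forall>i \<in> {1..n}. w i \<in> LamOmega n)"
    by (rule exists_w)
  show "\<forall>w. triangular_family n w \<and> (\<forall>i \<in> {1..n}. w i \<in> LamOmega n) \<longrightarrow>
            bij_betw (ext_eval n w) (ext_carrier n (Lam n)) (LamOmega n) \<and>
            ext_eval n w ext_one = ext_one \<and>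
            (\<forall>c \<in> ext_carrier n (Lam n). \<forall>d \<in> ext_carrier n (Lam n).
               ext_eval n w (ext_add c d) = ext_add (ext_eval n w c) (ext_eval n w d) \<and>
               ext_eval n w (ext_mult c d) = ext_mult (ext_eval n w c) (ext_eval n w d))"
  proof (intro allI impI)
    fix w assume h: "triangular_family n w \<and> (\<forall>i \<in> {1..n}. w i \<in> LamOmega n)"
    interpret T: trif n w using h by unfold_locales auto
    show "bij_betw (ext_eval n w) (ext_carrier n (Lam n)) (LamOmega n) \<and>
            ext_eval n w ext_one = ext_one \<and>
            (\<forall>c \<in> ext_carrier n (Lam n). \<forall>d \<in> ext_carrier n (Lam n).
               ext_eval n w (ext_add c d) = ext_add (ext_eval n w c) (ext_eval n w d) \<and>
               ext_eval n w (ext_mult c d) = ext_mult (ext_eval n w c) (ext_eval n w d))"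
      using T.ev_bij T.ev_one T.ev_add_ext T.ev_mult_ext by blast
  qed
  obtain w where h: "triangular_family n w \<and> (\<forall>i \<in> {1..n}. w i \<in> LamOmega n)" using ex by blast
  interpret T: trif n w using h by unfold_locales auto
  let ?I = "Pow {1..n}"
  have dom: "{c. (\<forall>S \<in> ?I. c S \<in> Lam n) \<and> (\<forall>S. S \<notin> ?I \<longrightarrow> c S = 0)} = ext_carrier n (Lam n)"
    by (auto simp: ext_carrier_def)
  have map: "(\<lambda>c. (\<lambda>U. \<Sum>S \<in> ?I. ext_scale (c S) (ext_monom w S) U)) = ext_eval n w"
    by (simp add: ext_eval_def[abs_def])
  have mem: "ext_monom w S \<in> LamOmega n" if S: "S \<in> ?I" for S
  proof -
    have "(\<lambda>T. if T = S then 1 else 0) \<in> ext_carrier n (Lam n)"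
      using S by (auto simp: carrier_iff supn_def)
    then show ?thesis using T.ev_LamOmega T.ev_monom_coeff[OF S] by metis
  qed
  show "\<exists>(I :: nat set set) (b :: nat set \<Rightarrow> ext).
            finite I \<and> card I = 2 ^ n \<and> (\<forall>S \<in> I. b S \<in> LamOmega n) \<and>
            bij_betw (\<lambda>c. (\<lambda>U. \<Sum>S \<in> I. ext_scale (c S) (b S) U))
              {c. (\<forall>S \<in> I. c S \<in> Lam n) \<and> (\<forall>S. S \<notin> I \<longrightarrow> c S = 0)}
              (LamOmega n)"
  proof (intro exI conjI)
    show "finite ?I" by simp
    show "card ?I = 2 ^ n" by (simp add: card_Pow)
    show "\<forall>S \<in> ?I. ext_monom w S \<in> LamOmega n" using mem by blast
    show "bij_betw (\<lambda>c. (\<lambda>U. \<Sum>S \<in> ?I. ext_scale (c S) (ext_monom w S) U))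
              {c. (\<forall>S \<in> ?I. c S \<in> Lam n) \<and> (\<forall>S. S \<notin> ?I \<longrightarrow> c S = 0)} (LamOmega n)"
      unfolding dom map by (rule T.ev_bij)
  qed
qed


end
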